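(* Under the setting and assumptions described in the context, there exists a constant $C>0$ depending only on $L$ and $\nu$ such that, for all sufficiently small $\delta t$ and every $j=0,\dots,M-1$, $$\int_{\mathbb{R}}|\widehat{\mathcal V}_{t_j}-\widehat{\mathcal U}_{t_j}|^2+\frac{\nu\,\delta t}{2}\int_{\mathbb{R}}|\widehat{\mathcal W}_{t_j}-\widehat{\mathcal Z}_{t_j}|^2\le C\big[\varepsilon^v_j+\delta t\,\varepsilon^{\mathcal W}_j\big].$$
   Context: Setting: $d=1$, $\nu>0$, $T>0$, $W$ a one-dimensional Brownian motion. Consider $i\partial_t u=\frac\nu2\partial_{xx}u+f(t,x,u)$, $u(T)=G$, with $u=u^R+iu^I$, $f=f^R+if^I$, $G=G^R+iG^I$ (we write $f(t,x,u)=f(t,x,u^R,u^I)$). Assumptions: (i) $u$ is a bounded solution with $\partial_tu,\partial_xu,\partial_{xx}u,\partial_{xxx}u,\partial_{xxxx}u,\partial_t\partial_xu,\partial_t\partial_{xx}u$ continuous; (ii) these derivatives belong to $L^\infty([0,T];L^2(\mathbb{R};\mathbb{C}))$ with norms less than $K$; (iii) there is $L>0$ with $|f(t,x,y)-f(t,x,y')|\le L|y-y'|$ and $|f(t,x,\phi(x))-f(t',x',\phi(x))|\le L(\sqrt{\rho(|t-t'|)}+|x-x'|)|\phi(x)|$ for all $t,t'\in[0,T]$, $x,x'\in\mathbb{R}$, $y,y'\in\mathbb{C}$, $\phi\in C(\mathbb{R};\mathbb{C})$, where $\rho:[0,\infty)\to[0,\infty)$ is continuous, increasing, $\rho(0)=0$.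 Time grid: $t_j=j\,\delta t$, $j=0,\dots,M$, $\delta t=T/M$; $\delta W_{t_j}=W_{t_{j+1}}-W_{t_j}$; for a starting point $x\in\mathbb{R}$, $X_{t_j}=x+\sqrt\nu W_{t_j}$; $\mathbb E_j$ is conditional expectation given $W_{t_1},\dots,W_{t_j}$. Algorithm: for $j$, parametrized functions (neural networks) $\mathcal U_{t_j}(\cdot;\xi)=\mathcal U^R_{t_j}+i\mathcal U^I_{t_j}$ and $\mathcal Z_{t_j}(\cdot;\eta)=\mathcal Z^R_{t_j}+i\mathcal Z^I_{t_j}$ with parameters $\theta=(\xi,\eta)\in\mathbb{R}^{N_m}$. Set $\widehat{\mathcal U}_{t_M}=G$, $\widehat{\mathcal Z}_{t_M}=G'$. For $j=M-1,\dots,0$, define $F^R=u^R+\frac{\sqrt\nu}2(z^R_{+}+z^I_{+})\Delta_w+\frac{\sqrt\nu}2(z^R-z^I)\Delta_w+f^I(t,x,u^R,u^I)\Delta_t$, $F^I=u^I-\frac{\sqrt\nu}2(z^R_{+}-z^I_{+})\Delta_w+\frac{\sqrt\nu}2(z^R+z^I)\Delta_w-f^R(t,x,u^R,u^I)\Delta_t$, evaluated at $t=t_j$, $x=X_{t_j}$, $u=\mathcal U_{t_j}(X_{t_j};\xi)$, $z=\mathcal Z_{t_j}(X_{t_j};\eta)$, $z_+=\widehat{\mathcal Z}_{t_{j+1}}(X_{t_{j+1}})$, $\Delta_t=\delta t$, $\Delta_w=\delta W_{t_j}$; minimize $L_j(\theta)=\mathbb E|\widehat{\mathcal U}^R_{t_{j+1}}(X_{t_{j+1}})-F^R|^2+\mathbb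 E|\widehat{\mathcal U}^I_{t_{j+1}}(X_{t_{j+1}})-F^I|^2$ over $\theta$, take a minimizer $\theta_j^*=(\xi_j^*,\eta_j^* )$ and set $\widehat{\mathcal U}_{t_j}=\mathcal U_{t_j}(\cdot;\xi^*_j)$, $\widehat{\mathcal Z}_{t_j}=\mathcal Z_{t_j}(\cdot;\eta_j^* )$. We write $\widehat{\mathcal U}_{t_j}$ also for $\widehat{\mathcal U}_{t_j}(X_{t_j})$, etc. Auxiliary system: given $\widehat{\mathcal U}_{t_{j+1}},\widehat{\mathcal Z}_{t_{j+1}}$ (evaluated at $X_{t_{j+1}}$), $\widehat{\mathcal V}_{t_j}=\widehat{\mathcal V}^R_{t_j}+i\widehat{\mathcal V}^I_{t_j}$ and $\widehat{\mathcal W}_{t_j}=\widehat{\mathcal W}^R_{t_j}+i\widehat{\mathcal W}^I_{t_j}$ are defined (uniquely for $\delta t$ small) by $\widehat{\mathcal V}^R_{t_j}=\mathbb E_j\widehat{\mathcal U}^R_{t_{j+1}}-\frac{\sqrt\nu}2\mathbb E_j[(\widehat{\mathcal Z}^R_{t_{j+1}}+\widehat{\mathcal Z}^I_{t_{j+1}})\delta W_{t_j}]-f^I(t_j,X_{t_j},\widehat{\mathcal V}^R_{t_j},\widehat{\mathcal V}^I_{t_j})\delta t$, $\widehat{\mathcal V}^I_{t_j}=\mathbb E_j\widehat{\mathcal U}^I_{t_{j+1}}+\frac{\sqrt\nu}2\mathbb E_j[(\widehat{\mathcal Z}^R_{t_{j+1}}-\widehat{\mathcal Z}^I_{t_{j+1}})\delta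 W_{t_j}]+f^R(t_j,X_{t_j},\widehat{\mathcal V}^R_{t_j},\widehat{\mathcal V}^I_{t_j})\delta t$, $\widehat{\mathcal W}^R_{t_j}=\frac{1}{\delta t\sqrt\nu}\mathbb E_j[(\widehat{\mathcal U}^R_{t_{j+1}}+\widehat{\mathcal U}^I_{t_{j+1}})\delta W_{t_j}]-\frac1{\delta t}\mathbb E_j[\widehat{\mathcal Z}^I_{t_{j+1}}(\delta W_{t_j})^2]$, $\widehat{\mathcal W}^I_{t_j}=\frac{1}{\delta t\sqrt\nu}\mathbb E_j[(\widehat{\mathcal U}^I_{t_{j+1}}-\widehat{\mathcal U}^R_{t_{j+1}})\delta W_{t_j}]+\frac1{\delta t}\mathbb E_j[\widehat{\mathcal Z}^R_{t_{j+1}}(\delta W_{t_j})^2]$; there are deterministic functions $\hat v_j,\hat w_j$ with $\widehat{\mathcal V}_{t_j}=\hat v_j(X_{t_j})$, $\widehat{\mathcal W}_{t_j}=\hat w_j(X_{t_j})$. Approximation errors: $\varepsilon^v_j=\int_{\mathbb R}\inf_\xi\mathbb E|\hat v_j(X_{t_j})-\mathcal U_{t_j}(X_{t_j};\xi)|^2$, $\varepsilon^{\mathcal W}_j=\int_{\mathbb R}\inf_\eta\mathbb E|\hat w_j(X_{t_j})-\mathcal Z_{t_j}(X_{t_j};\eta)|^2$. Convention: all quantities depend on the starting point $x$ through $X$, and for such a quantity $\Phi$, $\int_{\mathbb R}\Phi$ means $\int_{\mathbb R}\mathbb E[\Phi]\,dx$ (integration in the starting point $x$ w.r.t. Lebesgue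 measure, after expectation). *)

theory Defs
  imports "HOL-Probability.Probability"
begin

text \<open>Law of one Brownian increment over a time step dt: N(0, dt).\<close>
definition gauss :: "real \<Rightarrow> real measure" where
  "gauss dt = density lborel (normal_density 0 (sqrt dt))"

text \<open>Probability space of the first n Brownian increments
  (omega i = delta W at t_i, i < n), i.i.d. N(0, dt).\<close>
definition incr_space :: "real \<Rightarrow> nat \<Rightarrow> (nat \<Rightarrow> real) measure" where
  "incr_space dt n = PiM {..<n} (\<lambda>_. gauss dt)"

text \<open>X at t_j started from x: x + sqrt nu * W(t_j), W(t_j) = sum of the first j increments.\<close>
definition Xp :: "real \<Rightarrow> real \<Rightarrow> nat \<Rightarrow> (nat \<Rightarrow> real) \<Rightarrow> real" where
  "Xp nu x j \<omega> = x + sqrt nu * (\<Sum>i<j. \<omega> i)"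

definition EXp :: "real \<Rightarrow> real \<Rightarrow> real \<Rightarrow> nat \<Rightarrow> (real \<Rightarrow> real) \<Rightarrow> ennreal" where
  "EXp nu dt x j g = (\<integral>\<^sup>+ \<omega>. ennreal (g (Xp nu x j \<omega>)) \<partial>incr_space dt j)"

text \<open>Conditional expectation E_j [ h(X at t_(j+1), delta W_j) ] evaluated at X at t_j = y:
  since delta W_j is independent of the past, it equals the Gaussian integral below.\<close>
definition condE :: "real \<Rightarrow> real \<Rightarrow> (real \<Rightarrow> real \<Rightarrow> real) \<Rightarrow> real \<Rightarrow> real" where
  "condE nu dt h y = (\<integral>w. h (y + sqrt nu * w) w \<partial>gauss dt)"

text \<open>Parameter vectors in R^n, encoded as sequences vanishing from index n on.\<close>
definition params :: "nat \<Rightarrow> (nat \<Rightarrow> real) set" where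
  "params n = {\<theta>. \<forall>i\<ge>n. \<theta> i = 0}"

text \<open>Hat-U / Hat-Z of the algorithm: terminal datum at j = M, trained network otherwise
  (the trained parameter p j x may depend on the starting point x).\<close>
definition hatN :: "nat \<Rightarrow> (real \<Rightarrow> complex) \<Rightarrow> (nat \<Rightarrow> real \<Rightarrow> 'a \<Rightarrow> complex)
    \<Rightarrow> (nat \<Rightarrow> real \<Rightarrow> 'a) \<Rightarrow> nat \<Rightarrow> real \<Rightarrow> real \<Rightarrow> complex" where
  "hatN M G N p j x y = (if j = M then G y else N j y (p j x))"

text \<open>The loss L_j at starting point x. Unx, Znx: Hat-U, Hat-Z at t_(j+1);
  Uc, Zc: candidate networks U_(t_j)(.;xi), Z_(t_j)(.;eta).\<close>
definition loss :: "real \<Rightarrow> real \<Rightarrow> (real \<Rightarrow> real \<Rightarrow> complex \<Rightarrow> complex) \<Rightarrow> real \<Rightarrow> nat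
    \<Rightarrow> (real \<Rightarrow> complex) \<Rightarrow> (real \<Rightarrow> complex) \<Rightarrow> (real \<Rightarrow> complex) \<Rightarrow> (real \<Rightarrow> complex) \<Rightarrow> ennreal" where
  "loss nu dt f x j Unx Znx Uc Zc =
    (let X = Xp nu x j; X1 = Xp nu x (Suc j); tj = real j * dt;
         FR = (\<lambda>\<omega>. Re (Uc (X \<omega>))
                 + sqrt nu / 2 * (Re (Znx (X1 \<omega>)) + Im (Znx (X1 \<omega>))) * \<omega> j
                 + sqrt nu / 2 * (Re (Zc (X \<omega>)) - Im (Zc (X \<omega>))) * \<omega> j
                 + Im (f tj (X \<omega>) (Uc (X \<omega>))) * dt);
         FI = (\<lambda>\<omega>. Im (Uc (X \<omega>))
                 - sqrt nu / 2 * (Re (Znx (X1 \<omega>)) - Im (Znx (X1 \<omega>))) * \<omega> j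
                 + sqrt nu / 2 * (Re (Zc (X \<omega>)) + Im (Zc (X \<omega>))) * \<omega> j
                 - Re (f tj (X \<omega>) (Uc (X \<omega>))) * dt)
     in (\<integral>\<^sup>+ \<omega>. ennreal ((Re (Unx (X1 \<omega>)) - FR \<omega>)\<^sup>2) \<partial>incr_space dt (Suc j))
      + (\<integral>\<^sup>+ \<omega>. ennreal ((Im (Unx (X1 \<omega>)) - FI \<omega>)\<^sup>2) \<partial>incr_space dt (Suc j)))"

end

theory Submission
  imports Defs
begin

lemma integrable_prod_sq:
  fixes f g :: "'a \<Rightarrow> real"
  assumes [measurable]: "f \<in> borel_measurable M" "g \<in> borel_measurable M"
    and "integrable M (\<lambda>x. (f x)^2)" "integrable M (\<lambda>x. (g x)^2)"
  shows "integrable M (\<lambda>x. f x * g x)"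
proof (rule Bochner_Integration.integrable_bound)
  show "integrable M (\<lambda>x. (f x)^2 + (g x)^2)" using assms by auto
  show "(\<lambda>x. f x * g x) \<in> borel_measurable M" by measurable
  show "AE x in M. norm (f x * g x) \<le> norm ((f x)^2 + (g x)^2)"
  proof (rule AE_I2)
    fix x
    have "2 * \<bar>f x * g x\<bar> \<le> (f x)^2 + (g x)^2"
      using sum_squares_bound[of "\<bar>f x\<bar>" "\<bar>g x\<bar>"] by (simp add: abs_mult power2_abs)
    moreover have "0 \<le> (f x)^2 + (g x)^2" by simp
    ultimately show "norm (f x * g x) \<le> norm ((f x)^2 + (g x)^2)" by simp
  qed
qed

lemma (in prob_space) integrable_of_sq:
  fixes f :: "'a \<Rightarrow> real"
  assumes [measurable]: "f \<in> borel_measurable M" and "integrable M (\<lambda>x. (f x)^2)"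
  shows "integrable M f"
  using integrable_prod_sq[of f M "\<lambda>_. 1"] assms by simp

lemma (in prob_space) regression:
  fixes A W :: "'a \<Rightarrow> real" and d a b :: real
  assumes [measurable]: "A \<in> borel_measurable M" "W \<in> borel_measurable M"
    and iA2: "integrable M (\<lambda>\<omega>. (A \<omega>)^2)" and iW2: "integrable M (\<lambda>\<omega>. (W \<omega>)^2)"
    and EW: "expectation W = 0" and EW2: "expectation (\<lambda>\<omega>. (W \<omega>)^2) = d" and d: "d > 0"
  shows "(\<integral>\<^sup>+\<omega>. ennreal ((A \<omega> - a - b * W \<omega>)^2) \<partial>M) =
     ennreal ((expectation (\<lambda>\<omega>. (A \<omega>)^2) - (expectation A)^2 - (expectation (\<lambda>\<omega>. A \<omega> * W \<omega>))^2 / d)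
        + (expectation A - a)^2 + d * (expectation (\<lambda>\<omega>. A \<omega> * W \<omega>) / d - b)^2)"
proof -
  have iA: "integrable M A" by (rule integrable_of_sq) (use iA2 in auto)
  have iW: "integrable M W" by (rule integrable_of_sq) (use iW2 in auto)
  have iAW: "integrable M (\<lambda>\<omega>. A \<omega> * W \<omega>)" by (rule integrable_prod_sq) (use iA2 iW2 in auto)
  have eq: "\<And>\<omega>. (A \<omega> - a - b * W \<omega>)^2 = (A \<omega>)^2 + a^2 + b^2 * (W \<omega>)^2 - 2*a * A \<omega> - 2*b * (A \<omega> * W \<omega>) + 2*a*b * W \<omega>"
    by (simp add: power2_eq_square algebra_simps)
  have int: "integrable M (\<lambda>\<omega>. (A \<omega>)^2 + a^2 + b^2 * (W \<omega>)^2 - 2*a * A \<omega> - 2*b * (A \<omega> * W \<omega>) + 2*a*b * W \<omega>)"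
    using iA iW iAW iA2 iW2 by auto
  have "(\<integral>\<^sup>+\<omega>. ennreal ((A \<omega> - a - b * W \<omega>)^2) \<partial>M) =
      ennreal (expectation (\<lambda>\<omega>. (A \<omega>)^2 + a^2 + b^2 * (W \<omega>)^2 - 2*a * A \<omega> - 2*b * (A \<omega> * W \<omega>) + 2*a*b * W \<omega>))"
    unfolding eq by (rule nn_integral_eq_integral[OF int]) (auto simp: eq[symmetric])
  also have "expectation (\<lambda>\<omega>. (A \<omega>)^2 + a^2 + b^2 * (W \<omega>)^2 - 2*a * A \<omega> - 2*b * (A \<omega> * W \<omega>) + 2*a*b * W \<omega>)
     = expectation (\<lambda>\<omega>. (A \<omega>)^2) + a^2 + b^2 * d - 2*a * expectation A - 2*b * expectation (\<lambda>\<omega>. A \<omega> * W \<omega>)"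
    using iA iW iAW iA2 iW2 EW EW2 prob_space by (simp add: Bochner_Integration.integral_add Bochner_Integration.integral_diff)
  also have "\<dots> = (expectation (\<lambda>\<omega>. (A \<omega>)^2) - (expectation A)^2 - (expectation (\<lambda>\<omega>. A \<omega> * W \<omega>))^2 / d)
        + (expectation A - a)^2 + d * (expectation (\<lambda>\<omega>. A \<omega> * W \<omega>) / d - b)^2"
    using d by (simp add: power2_eq_square field_simps)
  finally show ?thesis .
qed

lemma (in prob_space) regression_nonneg:
  fixes A W :: "'a \<Rightarrow> real" and d :: real
  assumes [measurable]: "A \<in> borel_measurable M" "W \<in> borel_measurable M"
    and iA2: "integrable M (\<lambda>\<omega>. (A \<omega>)^2)" and iW2: "integrable M (\<lambda>\<omega>. (W \<omega>)^2)"
    and EW: "expectation W = 0" and EW2: "expectation (\<lambda>\<omega>. (W \<omega>)^2) = d" and d: "d > 0"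
  shows "0 \<le> expectation (\<lambda>\<omega>. (A \<omega>)^2) - (expectation A)^2 - (expectation (\<lambda>\<omega>. A \<omega> * W \<omega>))^2 / d"
proof -
  let ?a = "expectation A" and ?b = "expectation (\<lambda>\<omega>. A \<omega> * W \<omega>) / d"
  have "(\<integral>\<^sup>+\<omega>. ennreal ((A \<omega> - ?a - ?b * W \<omega>)^2) \<partial>M) =
     ennreal (expectation (\<lambda>\<omega>. (A \<omega>)^2) - (expectation A)^2 - (expectation (\<lambda>\<omega>. A \<omega> * W \<omega>))^2 / d)"
    using regression[OF assms, of ?a ?b] d by simp
  have iA: "integrable M A" by (rule integrable_of_sq) (use iA2 in auto)
  have iW: "integrable M W" by (rule integrable_of_sq) (use iW2 in auto)
  have iAW: "integrable M (\<lambda>\<omega>. A \<omega> * W \<omega>)" by (rule integrable_prod_sq) (use iA2 iW2 in auto)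
  have eq: "\<And>\<omega>. (A \<omega> - ?a - ?b * W \<omega>)^2 = (A \<omega>)^2 + ?a^2 + ?b^2 * (W \<omega>)^2 - 2*?a * A \<omega> - 2*?b * (A \<omega> * W \<omega>) + 2*?a*?b * W \<omega>"
    by (simp add: power2_eq_square algebra_simps)
  have int: "integrable M (\<lambda>\<omega>. (A \<omega> - ?a - ?b * W \<omega>)^2)"
    unfolding eq using iA iW iAW iA2 iW2 by auto
  have "0 \<le> expectation (\<lambda>\<omega>. (A \<omega> - ?a - ?b * W \<omega>)^2)" by simp
  also have "expectation (\<lambda>\<omega>. (A \<omega> - ?a - ?b * W \<omega>)^2) = 
     expectation (\<lambda>\<omega>. (A \<omega>)^2) - (expectation A)^2 - (expectation (\<lambda>\<omega>. A \<omega> * W \<omega>))^2 / d"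
  proof -
    have "ennreal (expectation (\<lambda>\<omega>. (A \<omega> - ?a - ?b * W \<omega>)^2)) = (\<integral>\<^sup>+\<omega>. ennreal ((A \<omega> - ?a - ?b * W \<omega>)^2) \<partial>M)"
      by (rule nn_integral_eq_integral[OF int, symmetric]) auto
    also have "\<dots> = ennreal (expectation (\<lambda>\<omega>. (A \<omega>)^2) - (expectation A)^2 - (expectation (\<lambda>\<omega>. A \<omega> * W \<omega>))^2 / d)"
      using regression[OF assms, of ?a ?b] d by simp
    finally have E: "ennreal (expectation (\<lambda>\<omega>. (A \<omega> - ?a - ?b * W \<omega>)^2)) = ennreal (expectation (\<lambda>\<omega>. (A \<omega>)^2) - (expectation A)^2 - (expectation (\<lambda>\<omega>. A \<omega> * W \<omega>))^2 / d)" .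
    have "expectation (\<lambda>\<omega>. (A \<omega> - ?a - ?b * W \<omega>)^2) = 
      expectation (\<lambda>\<omega>. (A \<omega>)^2) + ?a^2 + ?b^2 * d - 2*?a * ?a - 2*?b * expectation (\<lambda>\<omega>. A \<omega> * W \<omega>)"
      unfolding eq using iA iW iAW iA2 iW2 EW EW2 prob_space by (simp add: Bochner_Integration.integral_add Bochner_Integration.integral_diff)
    then show ?thesis using d by (simp add: power2_eq_square field_simps)
  qed
  finally show ?thesis .
qed

lemma sq3: "((p::real) - q - r)^2 \<le> 3 * p^2 + 3 * q^2 + 3 * r^2"
proof -
  have "0 \<le> (p + q)^2 + (p + r)^2 + (q - r)^2" by simp
  then show ?thesis by (simp add: power2_eq_square algebra_simps)
qed
lemma sq2: "((a::real) + b)^2 \<le> 2 * a^2 + 2 * b^2"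
proof -
  have "0 \<le> (a - b)^2" by simp
  then show ?thesis by (simp add: power2_eq_square algebra_simps)
qed
lemma ARAI_bound:
  fixes u1 u2 zr zi w nu :: real assumes "0 \<le> nu"
  shows "(u1 - sqrt nu / 2 * (zr + zi) * w)^2 + (u2 + sqrt nu / 2 * (zr - zi) * w)^2 \<le> 2 * u1^2 + 2 * u2^2 + nu * (zr^2 + zi^2) * w^2"
proof -
  have a: "(u1 - sqrt nu / 2 * (zr + zi) * w)^2 \<le> 2 * u1^2 + 2 * (sqrt nu / 2 * (zr + zi) * w)^2"
    using sq2[of u1 "- (sqrt nu / 2 * (zr + zi) * w)"] by simp
  have b: "(u2 + sqrt nu / 2 * (zr - zi) * w)^2 \<le> 2 * u2^2 + 2 * (sqrt nu / 2 * (zr - zi) * w)^2"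
    using sq2 by simp
  have c: "2 * (sqrt nu / 2 * (zr + zi) * w)^2 + 2 * (sqrt nu / 2 * (zr - zi) * w)^2 = nu * (zr^2 + zi^2) * w^2"
    using assms by (simp add: power_mult_distrib power2_eq_square field_simps)
  show ?thesis using a b c by linarith
qed
lemma F_sq: fixes F U :: complex assumes "cmod F \<le> c0 + L * cmod U" "0 \<le> c0" "0 \<le> L"
  shows "(cmod F)^2 \<le> 2 * c0^2 + 2 * L^2 * (cmod U)^2"
proof -
  have "(cmod F)^2 \<le> (c0 + L * cmod U)^2" using assms by (intro power_mono) auto
  also have "\<dots> \<le> 2 * c0^2 + 2 * (L * cmod U)^2" by (rule sq2)
  finally show ?thesis by (simp add: power_mult_distrib)
qed

lemma sets_gauss[measurable_cong]: "sets (gauss dt) = sets borel"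
  by (simp add: gauss_def)

lemma space_gauss[simp]: "space (gauss dt) = UNIV"
  by (simp add: gauss_def)

lemma gauss_prob: "0 < dt \<Longrightarrow> prob_space (gauss dt)"
  unfolding gauss_def by (rule prob_space_normal_density) simp

lemma gauss_nn: 
  assumes "g \<in> borel_measurable borel"
  shows "(\<integral>\<^sup>+w. g w \<partial>gauss dt) = (\<integral>\<^sup>+w. ennreal (normal_density 0 (sqrt dt) w) * g w \<partial>lborel)"
  unfolding gauss_def using assms by (subst nn_integral_density) auto

lemma gauss_integrable_iff:
  fixes g :: "real \<Rightarrow> real"
  assumes [measurable]: "g \<in> borel_measurable borel"
  shows "integrable (gauss dt) g = integrable lborel (\<lambda>w. normal_density 0 (sqrt dt) w * g w)"
  unfolding gauss_def by (subst integrable_density) auto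

lemma gauss_integral:
  fixes g :: "real \<Rightarrow> real"
  assumes [measurable]: "g \<in> borel_measurable borel"
  shows "integral\<^sup>L (gauss dt) g = (\<integral>w. normal_density 0 (sqrt dt) w * g w \<partial>lborel)"
  unfolding gauss_def by (subst integral_density) auto

lemma gauss_w:
  assumes "0 < dt"
  shows "integrable (gauss dt) (\<lambda>w. w)" "integral\<^sup>L (gauss dt) (\<lambda>w. w) = 0"
    "integrable (gauss dt) (\<lambda>w. w^2)" "integral\<^sup>L (gauss dt) (\<lambda>w. w^2) = dt"
proof -
  have s: "0 < sqrt dt" using assms by simp
  show "integrable (gauss dt) (\<lambda>w. w)"
    using integrable_normal_moment[OF s, of 0 1] by (subst gauss_integrable_iff) auto
  show "integral\<^sup>L (gauss dt) (\<lambda>w. w) = 0"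
    using integral_normal_moment_odd[OF s, of 0 0] by (subst gauss_integral) auto
  show "integrable (gauss dt) (\<lambda>w. w^2)"
    using integrable_normal_moment[OF s, of 0 2] by (subst gauss_integrable_iff) auto
  show "integral\<^sup>L (gauss dt) (\<lambda>w. w^2) = dt"
    using integral_normal_moment_even[OF s, of 0 1] assms by (subst gauss_integral) auto
qed

lemma sq_le_exp: "(w::real)^2 \<le> 2 * exp w + 2 * exp (-w)"
proof (cases "0 \<le> w")
  case True
  have "1 + w + w^2/2 \<le> exp w" using exp_lower_Taylor_quadratic[OF True] .
  moreover have "1 + (-w) \<le> exp (-w)" by (rule exp_ge_add_one_self)
  ultimately show ?thesis by linarith
next
  case False
  then have "0 \<le> -w" by simp
  have h1: "1 - w + w^2/2 \<le> exp (-w)" using exp_lower_Taylor_quadratic[OF \<open>0 \<le> -w\<close>] by simp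
  have h2: "1 + w \<le> exp w" by (rule exp_ge_add_one_self)
  from h1 h2 show ?thesis by linarith
qed

lemma nd_exp_shift:
  assumes "0 < dt"
  shows "normal_density 0 (sqrt dt) w * exp (c * w) = exp (c^2 * dt / 2) * normal_density 0 (sqrt dt) (w - c * dt)"
proof -
  have "- w\<^sup>2 / (2 * dt) + c * w = - (w - c * dt)\<^sup>2 / (2 * dt) + c^2 * dt / 2"
    using assms by (simp add: power2_eq_square field_simps)
  then show ?thesis using assms
    unfolding normal_density_def by (simp add: exp_add[symmetric] algebra_simps)
qed

lemma gauss_shift:
  assumes "0 < dt" and [measurable]: "g \<in> borel_measurable borel"
  shows "(\<integral>\<^sup>+w. ennreal (exp (c * w)) * g w \<partial>gauss dt) = ennreal (exp (c^2 * dt / 2)) * (\<integral>\<^sup>+w. g (w + c * dt) \<partial>gauss dt)"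
proof -
  have "(\<integral>\<^sup>+w. ennreal (exp (c * w)) * g w \<partial>gauss dt) =
     (\<integral>\<^sup>+w. ennreal (normal_density 0 (sqrt dt) w) * (ennreal (exp (c * w)) * g w) \<partial>lborel)"
    by (rule gauss_nn) measurable
  also have "\<dots> = (\<integral>\<^sup>+w. ennreal (exp (c^2 * dt / 2)) * (ennreal (normal_density 0 (sqrt dt) (w - c * dt)) * g w) \<partial>lborel)"
  proof (rule nn_integral_cong)
    fix w
    have "ennreal (normal_density 0 (sqrt dt) w) * ennreal (exp (c * w)) = ennreal (exp (c^2 * dt / 2)) * ennreal (normal_density 0 (sqrt dt) (w - c * dt))"
      by (simp add: ennreal_mult[symmetric] nd_exp_shift[OF assms(1)])
    then show "ennreal (normal_density 0 (sqrt dt) w) * (ennreal (exp (c * w)) * g w) = ennreal (exp (c^2 * dt / 2)) * (ennreal (normal_density 0 (sqrt dt) (w - c * dt)) * g w)"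
      by (metis mult.assoc)
  qed
  also have "\<dots> = ennreal (exp (c^2 * dt / 2)) * (\<integral>\<^sup>+w. ennreal (normal_density 0 (sqrt dt) (w - c * dt)) * g w \<partial>lborel)"
    by (rule nn_integral_cmult) measurable
  also have "(\<integral>\<^sup>+w. ennreal (normal_density 0 (sqrt dt) (w - c * dt)) * g w \<partial>lborel)
      = (\<integral>\<^sup>+w. ennreal (normal_density 0 (sqrt dt) w) * g (w + c * dt) \<partial>lborel)"
    using nn_integral_real_affine[of "\<lambda>w. ennreal (normal_density 0 (sqrt dt) (w - c * dt)) * g w" 1 "c * dt"]
    by (simp add: add.commute)
  also have "\<dots> = (\<integral>\<^sup>+w. g (w + c * dt) \<partial>gauss dt)"
    by (rule gauss_nn[symmetric]) measurable
  finally show ?thesis .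
qed

lemma gauss_sq_bound:
  assumes "0 < dt" and [measurable]: "g \<in> borel_measurable borel"
  shows "(\<integral>\<^sup>+w. g w * ennreal (w^2) \<partial>gauss dt) \<le> 2 * ennreal (exp (dt / 2)) * ((\<integral>\<^sup>+w. g (w + dt) \<partial>gauss dt) + (\<integral>\<^sup>+w. g (w - dt) \<partial>gauss dt))"
proof -
  have "(\<integral>\<^sup>+w. g w * ennreal (w^2) \<partial>gauss dt) \<le> (\<integral>\<^sup>+w. 2 * (ennreal (exp (1 * w)) * g w + ennreal (exp ((-1) * w)) * g w) \<partial>gauss dt)"
  proof (rule nn_integral_mono)
    fix w
    have "ennreal (w^2) \<le> 2 * (ennreal (exp w) + ennreal (exp (-w)))"
      proof -
      have "ennreal (w^2) \<le> ennreal (2 * (exp w + exp (-w)))" using sq_le_exp[of w] by (intro ennreal_leI) simp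
      also have "\<dots> = 2 * (ennreal (exp w) + ennreal (exp (-w)))"
        by (simp add: ennreal_mult ennreal_plus)
      finally show ?thesis .
    qed
    then have "g w * ennreal (w^2) \<le> g w * (2 * (ennreal (exp w) + ennreal (exp (-w))))"
      by (rule mult_left_mono) simp
    then show "g w * ennreal (w^2) \<le> 2 * (ennreal (exp (1 * w)) * g w + ennreal (exp ((-1) * w)) * g w)"
      by (simp add: distrib_left mult.commute mult.left_commute)
  qed
  also have "\<dots> = 2 * ((\<integral>\<^sup>+w. ennreal (exp (1 * w)) * g w \<partial>gauss dt) + (\<integral>\<^sup>+w. ennreal (exp ((-1) * w)) * g w \<partial>gauss dt))"
    by (subst nn_integral_cmult, measurable, subst nn_integral_add, measurable)
  also have "\<dots> = 2 * ennreal (exp (dt / 2)) * ((\<integral>\<^sup>+w. g (w + dt) \<partial>gauss dt) + (\<integral>\<^sup>+w. g (w - dt) \<partial>gauss dt))"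
  proof -
    have e1: "(\<integral>\<^sup>+w. ennreal (exp (1 * w)) * g w \<partial>gauss dt) = ennreal (exp (dt / 2)) * (\<integral>\<^sup>+w. g (w + dt) \<partial>gauss dt)"
      using gauss_shift[OF assms, of 1] by simp
    have e2: "(\<integral>\<^sup>+w. ennreal (exp ((-1) * w)) * g w \<partial>gauss dt) = ennreal (exp (dt / 2)) * (\<integral>\<^sup>+w. g (w - dt) \<partial>gauss dt)"
      using gauss_shift[OF assms, of "-1"] by simp
    show ?thesis by (simp only: e1 e2 distrib_left mult.assoc)
  qed
  finally show ?thesis .
qed


lemma nd_sq_bound:
  assumes "0 < dt"
  shows "normal_density 0 (sqrt dt) w * w^2 \<le> 2 * dt / sqrt (2 * pi * dt)"
proof -
  let ?t = "w^2 / (2*dt)"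
  have "?t \<le> exp ?t" using exp_ge_add_one_self[of ?t] by linarith
  then have "w^2 \<le> 2 * dt * exp ?t" using assms by (simp add: field_simps)
  then have a: "w^2 * exp (-?t) \<le> 2 * dt" using assms by (simp add: exp_minus field_simps)
  have "normal_density 0 (sqrt dt) w * w^2 = (w^2 * exp (-?t)) / sqrt (2 * pi * dt)"
    using assms by (simp add: normal_density_def)
  also have "\<dots> \<le> 2 * dt / sqrt (2 * pi * dt)"
    using a assms by (intro divide_right_mono) auto
  finally show ?thesis .
qed

lemma gauss_density_bound:
  assumes "0 < dt" "0 < s" and [measurable]: "g \<in> borel_measurable borel"
  shows "(\<integral>\<^sup>+w. g (y + s * w) * ennreal (w^2) \<partial>gauss dt) \<le> ennreal (2 * dt / sqrt (2 * pi * dt) / s) * (\<integral>\<^sup>+z. g z \<partial>lborel)"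
proof -
  let ?K = "2 * dt / sqrt (2 * pi * dt)"
  have "(\<integral>\<^sup>+w. g (y + s * w) * ennreal (w^2) \<partial>gauss dt) = (\<integral>\<^sup>+w. ennreal (normal_density 0 (sqrt dt) w) * (g (y + s * w) * ennreal (w^2)) \<partial>lborel)"
    by (rule gauss_nn) measurable
  also have "\<dots> \<le> (\<integral>\<^sup>+w. ennreal ?K * g (y + s * w) \<partial>lborel)"
  proof (rule nn_integral_mono)
    fix w
    have "ennreal (normal_density 0 (sqrt dt) w) * ennreal (w^2) \<le> ennreal ?K"
      using nd_sq_bound[OF assms(1), of w] by (simp add: ennreal_mult[symmetric] ennreal_leI)
    then have "ennreal (normal_density 0 (sqrt dt) w) * ennreal (w^2) * g (y + s * w) \<le> ennreal ?K * g (y + s * w)"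
      by (rule mult_right_mono) simp
    then show "ennreal (normal_density 0 (sqrt dt) w) * (g (y + s * w) * ennreal (w^2)) \<le> ennreal ?K * g (y + s * w)"
      by (simp add: ac_simps)
  qed
  also have "\<dots> = ennreal ?K * (\<integral>\<^sup>+w. g (y + s * w) \<partial>lborel)"
    by (rule nn_integral_cmult) measurable
  also have "(\<integral>\<^sup>+w. g (y + s * w) \<partial>lborel) = ennreal (1 / s) * (\<integral>\<^sup>+z. g z \<partial>lborel)"
  proof -
    have "(\<integral>\<^sup>+z. g z \<partial>lborel) = ennreal s * (\<integral>\<^sup>+w. g (y + s * w) \<partial>lborel)"
      using nn_integral_real_affine[of g s y] assms by simp
    then have "ennreal (1 / s) * (\<integral>\<^sup>+z. g z \<partial>lborel) = (ennreal (1/s) * ennreal s) * (\<integral>\<^sup>+w. g (y + s * w) \<partial>lborel)"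
      by (simp add: mult.assoc)
    also have "ennreal (1/s) * ennreal s = 1" using assms by (simp add: ennreal_mult[symmetric])
    finally show ?thesis by simp
  qed
  also have "ennreal ?K * (ennreal (1 / s) * (\<integral>\<^sup>+z. g z \<partial>lborel)) = ennreal (?K / s) * (\<integral>\<^sup>+z. g z \<partial>lborel)"
    using assms by (simp add: mult.assoc[symmetric] ennreal_mult[symmetric])
  finally show ?thesis .
qed

lemma incr_prob: "0 < dt \<Longrightarrow> prob_space (incr_space dt n)"
  unfolding incr_space_def by (rule prob_space_PiM) (simp add: gauss_prob)

lemma gauss_psf: "0 < dt \<Longrightarrow> product_sigma_finite (\<lambda>_::nat. gauss dt)"
  unfolding product_sigma_finite_def
  using gauss_prob prob_space_imp_sigma_finite by blast

lemma Xp_meas[measurable]: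
  assumes "j \<le> n"
  shows "Xp nu x j \<in> borel_measurable (incr_space dt n)"
proof -
  have "(\<lambda>om. \<Sum>i<j. om i) \<in> borel_measurable (incr_space dt n)"
    unfolding incr_space_def
    by (rule borel_measurable_sum) (use assms in \<open>auto intro!: measurable_PiM_component_rev\<close>)
  then show ?thesis unfolding Xp_def[abs_def] by measurable
qed

lemma comp_meas:
  assumes "j < n"
  shows "(\<lambda>om. om j) \<in> borel_measurable (incr_space dt n)"
  unfolding incr_space_def using assms by (auto intro!: measurable_PiM_component_rev)

lemma Xp_upd_same: "Xp nu x j (om(j := w)) = Xp nu x j om"
  unfolding Xp_def by (auto intro!: sum.cong)

lemma Xp_upd_Suc: "Xp nu x (Suc j) (om(j := w)) = Xp nu x j om + sqrt nu * w"
  unfolding Xp_def by (simp add: Xp_upd_same[unfolded Xp_def] sum.cong[of "{..<j}" "{..<j}" "\<lambda>i. (om(j:=w)) i" om] algebra_simps)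

lemma Xp_shift: "Xp nu x j om + c = Xp nu (x + c) j om"
  unfolding Xp_def by simp

lemma incr_split:
  assumes "0 < dt" and h: "h \<in> borel_measurable (incr_space dt (Suc j))"
  shows "(\<integral>\<^sup>+om. h om \<partial>incr_space dt (Suc j)) = (\<integral>\<^sup>+om. (\<integral>\<^sup>+w. h (om(j := w)) \<partial>gauss dt) \<partial>incr_space dt j)"
proof -
  interpret product_sigma_finite "\<lambda>_::nat. gauss dt" using gauss_psf[OF assms(1)] .
  have e: "{..<Suc j} = insert j {..<j}" by auto
  show ?thesis
    unfolding incr_space_def e
    by (rule product_nn_integral_insert) (use h in \<open>auto simp: incr_space_def e\<close>)
qed

lemma nn_integral_cmult_le:
  "ennreal c * (\<integral>\<^sup>+x. f x \<partial>M) \<le> (\<integral>\<^sup>+x. ennreal c * f x \<partial>M)"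
  unfolding nn_integral_def SUP_mult_left_ennreal
proof (rule SUP_least)
  fix g assume g: "g \<in> {g. simple_function M g \<and> g \<le> f}"
  have "ennreal c * integral\<^sup>S M g = integral\<^sup>S M (\<lambda>x. ennreal c * g x)"
    using g by simp
  also have "\<dots> \<le> (SUP g\<in>{g. simple_function M g \<and> g \<le> (\<lambda>x. ennreal c * f x)}. integral\<^sup>S M g)"
    using g by (intro SUP_upper) (auto simp: le_fun_def intro!: mult_left_mono)
  finally show "ennreal c * integral\<^sup>S M g \<le> (SUP g\<in>{g. simple_function M g \<and> g \<le> (\<lambda>x. ennreal c * f x)}. integral\<^sup>S M g)" .
qed

lemma nn_integral_cmult_gen:
  assumes "0 < c"
  shows "(\<integral>\<^sup>+x. ennreal c * f x \<partial>M) = ennreal c * (\<integral>\<^sup>+x. f x \<partial>M)"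
proof (rule antisym)
  have "ennreal (1/c) * (\<integral>\<^sup>+x. ennreal c * f x \<partial>M) \<le> (\<integral>\<^sup>+x. ennreal (1/c) * (ennreal c * f x) \<partial>M)"
    by (rule nn_integral_cmult_le)
  also have "\<dots> = (\<integral>\<^sup>+x. f x \<partial>M)"
    using assms by (simp add: mult.assoc[symmetric] ennreal_mult[symmetric])
  finally have "ennreal c * (ennreal (1/c) * (\<integral>\<^sup>+x. ennreal c * f x \<partial>M)) \<le> ennreal c * (\<integral>\<^sup>+x. f x \<partial>M)"
    by (rule mult_left_mono) simp
  then show "(\<integral>\<^sup>+x. ennreal c * f x \<partial>M) \<le> ennreal c * (\<integral>\<^sup>+x. f x \<partial>M)"
    using assms by (simp add: mult.assoc[symmetric] ennreal_mult[symmetric])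
qed (rule nn_integral_cmult_le)

lemma nn_integral_superadd:
  "(\<integral>\<^sup>+x. f x \<partial>M) + (\<integral>\<^sup>+x. g x \<partial>M) \<le> (\<integral>\<^sup>+x. f x + g x \<partial>M)"
proof -
  have ne: "{h. simple_function M h \<and> h \<le> f} \<noteq> {}" "{h. simple_function M h \<and> h \<le> g} \<noteq> {}"
    by (auto intro!: exI[of _ "\<lambda>_. 0"] simp: le_fun_def)
  let ?R = "(SUP h\<in>{h. simple_function M h \<and> h \<le> (\<lambda>x. f x + g x)}. integral\<^sup>S M h)"
  have key: "integral\<^sup>S M h1 + integral\<^sup>S M h2 \<le> ?R"
    if h1: "h1 \<in> {h. simple_function M h \<and> h \<le> f}" and h2: "h2 \<in> {h. simple_function M h \<and> h \<le> g}" for h1 h2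
  proof -
    have "integral\<^sup>S M h1 + integral\<^sup>S M h2 = integral\<^sup>S M (\<lambda>x. h1 x + h2 x)"
      using h1 h2 by (simp add: simple_integral_add)
    also have "\<dots> \<le> ?R"
      using h1 h2 by (intro SUP_upper) (auto simp: le_fun_def intro!: add_mono)
    finally show ?thesis .
  qed
  have "integral\<^sup>S M h1 + (SUP h\<in>{h. simple_function M h \<and> h \<le> g}. integral\<^sup>S M h) \<le> ?R"
    if h1: "h1 \<in> {h. simple_function M h \<and> h \<le> f}" for h1
    unfolding ennreal_SUP_add_right[OF ne(2)] by (rule SUP_least) (rule key[OF h1])
  then have "(SUP h\<in>{h. simple_function M h \<and> h \<le> f}. integral\<^sup>S M h) + (SUP h\<in>{h. simple_function M h \<and> h \<le> g}. integral\<^sup>S M h) \<le> ?R"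
    unfolding ennreal_SUP_add_left[OF ne(1), symmetric] by (rule SUP_least)
  then show ?thesis unfolding nn_integral_def .
qed


lemma ennreal_cancel_mid:
  fixes a b b' c :: ennreal
  assumes "a + b + c \<le> a + b' + c" "a < \<infinity>" "c < \<infinity>"
  shows "b \<le> b'"
proof -
  have "(a + c) + b \<le> (a + c) + b'" using assms(1) by (simp add: ac_simps)
  moreover have "a + c \<noteq> \<infinity>" using assms(2,3) by (simp add: less_top[symmetric])
  ultimately show ?thesis by (simp add: ennreal_add_left_cancel_le)
qed

lemma ennreal_cancel_last:
  fixes a b c c' :: ennreal
  assumes "a + b + c \<le> a + b + c'" "a < \<infinity>" "b < \<infinity>"
  shows "c \<le> c'"
proof -
  have "a + b \<noteq> \<infinity>" using assms(2,3) by (simp add: less_top[symmetric])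
  then show ?thesis using assms(1) by (simp add: ennreal_add_left_cancel_le)
qed

lemma ennreal_cancel_mult:
  fixes b c :: ennreal
  assumes "ennreal d * b \<le> ennreal d * c" "0 < d"
  shows "b \<le> c"
proof -
  have "ennreal (1/d) * (ennreal d * b) \<le> ennreal (1/d) * (ennreal d * c)"
    using assms(1) by (rule mult_left_mono) simp
  then show ?thesis using assms(2) by (simp add: mult.assoc[symmetric] ennreal_mult[symmetric])
qed

lemma sq_add_int:
  fixes f g :: "'a \<Rightarrow> real"
  assumes [measurable]: "f \<in> borel_measurable M" "g \<in> borel_measurable M"
    and "integrable M (\<lambda>x. (f x)^2)" "integrable M (\<lambda>x. (g x)^2)"
  shows "integrable M (\<lambda>x. (f x + g x)^2)" "integrable M (\<lambda>x. (f x - g x)^2)"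
proof -
  have p: "integrable M (\<lambda>x. f x * g x)" by (rule integrable_prod_sq) (use assms in auto)
  show "integrable M (\<lambda>x. (f x + g x)^2)"
    unfolding power2_sum using assms p by (auto simp: mult.assoc)
  show "integrable M (\<lambda>x. (f x - g x)^2)"
    unfolding power2_diff using assms p by (auto simp: mult.assoc)
qed

lemma sq_cmult_int:
  fixes f :: "'a \<Rightarrow> real"
  assumes "integrable M (\<lambda>x. (f x)^2)"
  shows "integrable M (\<lambda>x. (c * f x)^2)"
  using assms by (simp add: power_mult_distrib)

lemma nn_fin_int:
  fixes f :: "'a \<Rightarrow> real"
  assumes [measurable]: "f \<in> borel_measurable M" and "\<And>x. 0 \<le> f x" and "(\<integral>\<^sup>+x. ennreal (f x) \<partial>M) < \<infinity>"
  shows "integrable M f"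
  by (rule integrableI_bounded) (use assms in auto)

lemma pair_gauss_meas:
  "f \<in> borel_measurable (borel \<Otimes>\<^sub>M borel) \<Longrightarrow> f \<in> borel_measurable (borel \<Otimes>\<^sub>M gauss dt)"
  using measurable_cong_sets[OF sets_pair_measure_cong[OF refl sets_gauss[of dt, symmetric]] refl] by simp

context
  fixes nu dt L c0 :: real and j :: nat and x :: real
    and Up Zp :: "real \<Rightarrow> complex" and f :: "real \<Rightarrow> real \<Rightarrow> complex \<Rightarrow> complex"
  assumes nu: "0 < nu" and dt: "0 < dt" and Lpos: "0 < L" and Ldt: "L * dt \<le> 1/4" and c0: "0 \<le> c0"
    and Up_m[measurable]: "Up \<in> borel_measurable borel" and Zp_m[measurable]: "Zp \<in> borel_measurable borel"
    and finU: "(\<integral>\<^sup>+om. ennreal ((cmod (Up (Xp nu x (Suc j) om)))^2) \<partial>incr_space dt (Suc j)) < \<infinity>"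
    and finZ: "(\<integral>\<^sup>+om. ennreal ((cmod (Zp (Xp nu x (Suc j) om)))^2 * (om j)^2) \<partial>incr_space dt (Suc j)) < \<infinity>"
    and F_m: "(\<lambda>(y,z). f (real j * dt) y z) \<in> borel_measurable (borel \<Otimes>\<^sub>M borel)"
    and F_lip: "\<And>y z z'. cmod (f (real j * dt) y z - f (real j * dt) y z') \<le> L * cmod (z - z')"
    and F_bd: "\<And>y z. cmod (f (real j * dt) y z) \<le> c0 + L * cmod z"
begin

lemma F_comp[measurable]:
  assumes "g \<in> borel_measurable M" "U \<in> borel_measurable M"
  shows "(\<lambda>a. f (real j * dt) (g a) (U a)) \<in> borel_measurable M"
proof -
  have "(\<lambda>a. (g a, U a)) \<in> measurable M (borel \<Otimes>\<^sub>M borel)" using assms by measurable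
  from measurable_comp[OF this F_m] show ?thesis by (simp add: comp_def)
qed

interpretation G: prob_space "gauss dt" using gauss_prob[OF dt] .


definition AR where "AR y w = Re (Up (y + sqrt nu * w)) - sqrt nu / 2 * (Re (Zp (y + sqrt nu * w)) + Im (Zp (y + sqrt nu * w))) * w"
definition AI where "AI y w = Im (Up (y + sqrt nu * w)) + sqrt nu / 2 * (Re (Zp (y + sqrt nu * w)) - Im (Zp (y + sqrt nu * w))) * w"
definition good where "good y \<longleftrightarrow> (\<integral>\<^sup>+w. ennreal ((cmod (Up (y + sqrt nu * w)))^2) \<partial>gauss dt) < \<infinity> \<and>
   (\<integral>\<^sup>+w. ennreal ((cmod (Zp (y + sqrt nu * w)))^2 * w^2) \<partial>gauss dt) < \<infinity>"

lemma AR_pm[measurable]: "(\<lambda>(y,w). AR y w) \<in> borel_measurable (borel \<Otimes>\<^sub>M gauss dt)"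
  by (rule pair_gauss_meas) (simp add: AR_def[abs_def])

lemma AI_pm[measurable]: "(\<lambda>(y,w). AI y w) \<in> borel_measurable (borel \<Otimes>\<^sub>M gauss dt)"
  by (rule pair_gauss_meas) (simp add: AI_def[abs_def])

lemma good_int:
  assumes "good y"
  shows "integrable (gauss dt) (\<lambda>w. Re (Up (y + sqrt nu * w)))"
    "integrable (gauss dt) (\<lambda>w. Im (Up (y + sqrt nu * w)))"
    "integrable (gauss dt) (\<lambda>w. Re (Up (y + sqrt nu * w)) * w)"
    "integrable (gauss dt) (\<lambda>w. Im (Up (y + sqrt nu * w)) * w)"
    "integrable (gauss dt) (\<lambda>w. Re (Zp (y + sqrt nu * w)) * w)"
    "integrable (gauss dt) (\<lambda>w. Im (Zp (y + sqrt nu * w)) * w)"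
    "integrable (gauss dt) (\<lambda>w. Re (Zp (y + sqrt nu * w)) * w^2)"
    "integrable (gauss dt) (\<lambda>w. Im (Zp (y + sqrt nu * w)) * w^2)"
    "integrable (gauss dt) (\<lambda>w. (AR y w)^2)"
    "integrable (gauss dt) (\<lambda>w. (AI y w)^2)"
proof -
  let ?U = "\<lambda>w. Up (y + sqrt nu * w)" and ?Z = "\<lambda>w. Zp (y + sqrt nu * w)"
  have [measurable]: "?U \<in> borel_measurable (gauss dt)" "?Z \<in> borel_measurable (gauss dt)" by measurable
  have iU: "integrable (gauss dt) (\<lambda>w. (cmod (?U w))^2)"
    by (rule nn_fin_int) (use assms in \<open>auto simp: good_def\<close>)
  have iZ: "integrable (gauss dt) (\<lambda>w. (cmod (?Z w))^2 * w^2)"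
    by (rule nn_fin_int) (use assms in \<open>auto simp: good_def\<close>)
  have iw: "integrable (gauss dt) (\<lambda>w. w^2)" using gauss_w[OF dt] by simp
  have i1: "integrable (gauss dt) (\<lambda>w. 1::real)" by simp
  have sq1: "integrable (gauss dt) (\<lambda>w. (Re (?U w))^2)"
    by (rule Bochner_Integration.integrable_bound[OF iU]) (auto simp: cmod_power2)
  have sq2: "integrable (gauss dt) (\<lambda>w. (Im (?U w))^2)"
    by (rule Bochner_Integration.integrable_bound[OF iU]) (auto simp: cmod_power2)
  have sq3: "integrable (gauss dt) (\<lambda>w. (Re (?Z w) * w)^2)"
    proof (rule Bochner_Integration.integrable_bound[OF iZ])
    show "AE w in gauss dt. norm ((Re (?Z w) * w)^2) \<le> norm ((cmod (?Z w))^2 * w^2)"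
    proof (rule AE_I2)
      fix w
      have "(Re (?Z w))^2 \<le> (cmod (?Z w))^2" by (simp add: cmod_power2)
      then have "(Re (?Z w))^2 * w^2 \<le> (cmod (?Z w))^2 * w^2" by (rule mult_right_mono) simp
      then show "norm ((Re (?Z w) * w)^2) \<le> norm ((cmod (?Z w))^2 * w^2)" by (simp add: power_mult_distrib)
    qed
  qed measurable
  have sq4: "integrable (gauss dt) (\<lambda>w. (Im (?Z w) * w)^2)"
    proof (rule Bochner_Integration.integrable_bound[OF iZ])
    show "AE w in gauss dt. norm ((Im (?Z w) * w)^2) \<le> norm ((cmod (?Z w))^2 * w^2)"
    proof (rule AE_I2)
      fix w
      have "(Im (?Z w))^2 \<le> (cmod (?Z w))^2" by (simp add: cmod_power2)
      then have "(Im (?Z w))^2 * w^2 \<le> (cmod (?Z w))^2 * w^2" by (rule mult_right_mono) simp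
      then show "norm ((Im (?Z w) * w)^2) \<le> norm ((cmod (?Z w))^2 * w^2)" by (simp add: power_mult_distrib)
    qed
  qed measurable
  show "integrable (gauss dt) (\<lambda>w. Re (?U w))" by (rule G.integrable_of_sq) (use sq1 in auto)
  show "integrable (gauss dt) (\<lambda>w. Im (?U w))" by (rule G.integrable_of_sq) (use sq2 in auto)
  show "integrable (gauss dt) (\<lambda>w. Re (?U w) * w)" by (rule integrable_prod_sq) (use sq1 iw in auto)
  show "integrable (gauss dt) (\<lambda>w. Im (?U w) * w)" by (rule integrable_prod_sq) (use sq2 iw in auto)
  show "integrable (gauss dt) (\<lambda>w. Re (?Z w) * w)" by (rule G.integrable_of_sq) (use sq3 in auto)
  show "integrable (gauss dt) (\<lambda>w. Im (?Z w) * w)" by (rule G.integrable_of_sq) (use sq4 in auto)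
  have "integrable (gauss dt) (\<lambda>w. (Re (?Z w) * w) * w)"
    by (rule integrable_prod_sq[OF _ _ sq3 iw]) measurable
  moreover have "(\<lambda>w. (Re (?Z w) * w) * w) = (\<lambda>w. Re (?Z w) * w^2)"
    by (rule ext) (simp add: power2_eq_square)
  ultimately show "integrable (gauss dt) (\<lambda>w. Re (?Z w) * w^2)" by simp
  have "integrable (gauss dt) (\<lambda>w. (Im (?Z w) * w) * w)"
    by (rule integrable_prod_sq[OF _ _ sq4 iw]) measurable
  moreover have "(\<lambda>w. (Im (?Z w) * w) * w) = (\<lambda>w. Im (?Z w) * w^2)"
    by (rule ext) (simp add: power2_eq_square)
  ultimately show "integrable (gauss dt) (\<lambda>w. Im (?Z w) * w^2)" by simp
  have s34: "integrable (gauss dt) (\<lambda>w. (Re (?Z w) * w + Im (?Z w) * w)^2)"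
    "integrable (gauss dt) (\<lambda>w. (Re (?Z w) * w - Im (?Z w) * w)^2)"
    using sq_add_int[OF _ _ sq3 sq4] by auto
  have a1: "integrable (gauss dt) (\<lambda>w. (sqrt nu / 2 * (Re (?Z w) * w + Im (?Z w) * w))^2)"
    by (rule sq_cmult_int[OF s34(1)])
  have "integrable (gauss dt) (\<lambda>w. (Re (?U w) - sqrt nu / 2 * (Re (?Z w) * w + Im (?Z w) * w))^2)"
    by (rule sq_add_int(2)[OF _ _ sq1 a1]) measurable
  moreover have "(\<lambda>w. (Re (?U w) - sqrt nu / 2 * (Re (?Z w) * w + Im (?Z w) * w))^2) = (\<lambda>w. (AR y w)^2)"
    by (rule ext) (simp add: AR_def algebra_simps)
  ultimately show "integrable (gauss dt) (\<lambda>w. (AR y w)^2)" by simp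
  have a2: "integrable (gauss dt) (\<lambda>w. (sqrt nu / 2 * (Re (?Z w) * w - Im (?Z w) * w))^2)"
    by (rule sq_cmult_int[OF s34(2)])
  have "integrable (gauss dt) (\<lambda>w. (Im (?U w) + sqrt nu / 2 * (Re (?Z w) * w - Im (?Z w) * w))^2)"
    by (rule sq_add_int(1)[OF _ _ sq2 a2]) measurable
  moreover have "(\<lambda>w. (Im (?U w) + sqrt nu / 2 * (Re (?Z w) * w - Im (?Z w) * w))^2) = (\<lambda>w. (AI y w)^2)"
    by (rule ext) (simp add: AI_def algebra_simps)
  ultimately show "integrable (gauss dt) (\<lambda>w. (AI y w)^2)" by simp
qed


lemma X_comp_meas[measurable]: "(\<lambda>(om, w). Xp nu x j om + sqrt nu * w) \<in> borel_measurable (incr_space dt j \<Otimes>\<^sub>M gauss dt)"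
proof -
  have "(\<lambda>om. Xp nu x j om) \<in> borel_measurable (incr_space dt j)" by (rule Xp_meas) simp
  then show ?thesis by measurable
qed

lemma AE_good: "AE om in incr_space dt j. good (Xp nu x j om)"
proof -
  have m1: "(\<lambda>om. \<integral>\<^sup>+w. ennreal ((cmod (Up (Xp nu x j om + sqrt nu * w)))^2) \<partial>gauss dt) \<in> borel_measurable (incr_space dt j)"
  proof (rule G.borel_measurable_nn_integral)
    have "(\<lambda>z. ennreal ((cmod (Up z))^2)) \<circ> (\<lambda>(om, w). Xp nu x j om + sqrt nu * w) \<in> borel_measurable (incr_space dt j \<Otimes>\<^sub>M gauss dt)"
      by (rule measurable_comp[OF X_comp_meas]) measurable
    then show "(\<lambda>(om, w). ennreal ((cmod (Up (Xp nu x j om + sqrt nu * w)))^2)) \<in> borel_measurable (incr_space dt j \<Otimes>\<^sub>M gauss dt)"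
      by (simp add: comp_def case_prod_beta')
  qed
  have m2: "(\<lambda>om. \<integral>\<^sup>+w. ennreal ((cmod (Zp (Xp nu x j om + sqrt nu * w)))^2 * w^2) \<partial>gauss dt) \<in> borel_measurable (incr_space dt j)"
  proof (rule G.borel_measurable_nn_integral)
    have a: "(\<lambda>p. Xp nu x j (fst p) + sqrt nu * snd p) \<in> borel_measurable (incr_space dt j \<Otimes>\<^sub>M gauss dt)"
      using X_comp_meas by (simp add: case_prod_beta')
    have "(\<lambda>p. ennreal ((cmod (Zp (Xp nu x j (fst p) + sqrt nu * snd p)))^2 * (snd p)^2)) \<in> borel_measurable (incr_space dt j \<Otimes>\<^sub>M gauss dt)"
      using a by measurable
    then show "(\<lambda>(om, w). ennreal ((cmod (Zp (Xp nu x j om + sqrt nu * w)))^2 * w^2)) \<in> borel_measurable (incr_space dt j \<Otimes>\<^sub>M gauss dt)"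
      by (simp add: case_prod_beta')
  qed
  have "(\<integral>\<^sup>+om. \<integral>\<^sup>+w. ennreal ((cmod (Up (Xp nu x j om + sqrt nu * w)))^2) \<partial>gauss dt \<partial>incr_space dt j)
     = (\<integral>\<^sup>+om. ennreal ((cmod (Up (Xp nu x (Suc j) om)))^2) \<partial>incr_space dt (Suc j))"
    by (subst incr_split[OF dt]) (auto simp: Xp_upd_Suc intro!: Xp_meas)
  with finU have f1: "(\<integral>\<^sup>+om. \<integral>\<^sup>+w. ennreal ((cmod (Up (Xp nu x j om + sqrt nu * w)))^2) \<partial>gauss dt \<partial>incr_space dt j) \<noteq> \<infinity>"
    by simp
  have "(\<integral>\<^sup>+om. \<integral>\<^sup>+w. ennreal ((cmod (Zp (Xp nu x j om + sqrt nu * w)))^2 * w^2) \<partial>gauss dt \<partial>incr_space dt j)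
     = (\<integral>\<^sup>+om. ennreal ((cmod (Zp (Xp nu x (Suc j) om)))^2 * (om j)^2) \<partial>incr_space dt (Suc j))"
  proof (subst incr_split[OF dt])
    show "(\<lambda>om. ennreal ((cmod (Zp (Xp nu x (Suc j) om)))^2 * (om j)^2)) \<in> borel_measurable (incr_space dt (Suc j))"
      using Xp_meas[of "Suc j" "Suc j" nu x dt] comp_meas[of j "Suc j" dt] by measurable
  qed (auto simp: Xp_upd_Suc)
  with finZ have f2: "(\<integral>\<^sup>+om. \<integral>\<^sup>+w. ennreal ((cmod (Zp (Xp nu x j om + sqrt nu * w)))^2 * w^2) \<partial>gauss dt \<partial>incr_space dt j) \<noteq> \<infinity>"
    by simp
  show ?thesis
    using nn_integral_PInf_AE[OF m1 f1] nn_integral_PInf_AE[OF m2 f2]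
    by eventually_elim (auto simp: good_def less_top)
qed

definition mR where "mR y = (\<integral>w. AR y w \<partial>gauss dt)"
definition nR where "nR y = (\<integral>w. AR y w * w \<partial>gauss dt)"
definition SR where "SR y = (\<integral>w. (AR y w)^2 \<partial>gauss dt) - (mR y)^2 - (nR y)^2 / dt"
definition mI where "mI y = (\<integral>w. AI y w \<partial>gauss dt)"
definition nI where "nI y = (\<integral>w. AI y w * w \<partial>gauss dt)"
definition SI where "SI y = (\<integral>w. (AI y w)^2 \<partial>gauss dt) - (mI y)^2 - (nI y)^2 / dt"

lemma AR_pm2: "(\<lambda>(y,w). AR y w * w) \<in> borel_measurable (borel \<Otimes>\<^sub>M gauss dt)"
  "(\<lambda>(y,w). (AR y w)^2) \<in> borel_measurable (borel \<Otimes>\<^sub>M gauss dt)"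
  "(\<lambda>(y,w). AI y w * w) \<in> borel_measurable (borel \<Otimes>\<^sub>M gauss dt)"
  "(\<lambda>(y,w). (AI y w)^2) \<in> borel_measurable (borel \<Otimes>\<^sub>M gauss dt)"
  using AR_pm AI_pm by (simp_all add: case_prod_beta') measurable

lemma mR_m[measurable]: "mR \<in> borel_measurable borel"
  unfolding mR_def[abs_def] by (rule G.borel_measurable_lebesgue_integral[OF AR_pm])
lemma nR_m[measurable]: "nR \<in> borel_measurable borel"
  unfolding nR_def[abs_def] by (rule G.borel_measurable_lebesgue_integral[OF AR_pm2(1)])
lemma mI_m[measurable]: "mI \<in> borel_measurable borel"
  unfolding mI_def[abs_def] by (rule G.borel_measurable_lebesgue_integral[OF AI_pm])
lemma nI_m[measurable]: "nI \<in> borel_measurable borel"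
  unfolding nI_def[abs_def] by (rule G.borel_measurable_lebesgue_integral[OF AR_pm2(3)])
lemma SR_m[measurable]: "SR \<in> borel_measurable borel"
proof -
  have "(\<lambda>y. \<integral>w. (AR y w)^2 \<partial>gauss dt) \<in> borel_measurable borel"
    by (rule G.borel_measurable_lebesgue_integral[OF AR_pm2(2)])
  then show ?thesis unfolding SR_def[abs_def] by measurable
qed
lemma SI_m[measurable]: "SI \<in> borel_measurable borel"
proof -
  have "(\<lambda>y. \<integral>w. (AI y w)^2 \<partial>gauss dt) \<in> borel_measurable borel"
    by (rule G.borel_measurable_lebesgue_integral[OF AR_pm2(4)])
  then show ?thesis unfolding SI_def[abs_def] by measurable
qed

lemma reg_R:
  assumes "good y"
  shows "(\<integral>\<^sup>+w. ennreal ((AR y w - a - b * w)^2) \<partial>gauss dt) = ennreal (SR y + (mR y - a)^2 + dt * (nR y / dt - b)^2)"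
    and "0 \<le> SR y"
proof -
  have mA: "AR y \<in> borel_measurable (gauss dt)" using measurable_Pair2[OF AR_pm, of y] by simp
  note w = gauss_w[OF dt]
  note gi = good_int[OF assms]
  have e: "(\<integral>\<^sup>+w. ennreal ((AR y w - a - b * w)^2) \<partial>gauss dt) = ennreal ((G.expectation (\<lambda>\<omega>. (AR y \<omega>)^2) - (G.expectation (AR y))^2 - (G.expectation (\<lambda>\<omega>. AR y \<omega> * \<omega>))^2 / dt)
        + (G.expectation (AR y) - a)^2 + dt * (G.expectation (\<lambda>\<omega>. AR y \<omega> * \<omega>) / dt - b)^2)"
    by (rule G.regression[of "AR y" "\<lambda>w. w" dt a b], rule mA, simp, rule gi(9), rule w(3), rule w(2), rule w(4), rule dt)
  have e2: "0 \<le> G.expectation (\<lambda>\<omega>. (AR y \<omega>)^2) - (G.expectation (AR y))^2 - (G.expectation (\<lambda>\<omega>. AR y \<omega> * \<omega>))^2 / dt"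
    by (rule G.regression_nonneg[of "AR y" "\<lambda>w. w" dt], rule mA, simp, rule gi(9), rule w(3), rule w(2), rule w(4), rule dt)
  show "(\<integral>\<^sup>+w. ennreal ((AR y w - a - b * w)^2) \<partial>gauss dt) = ennreal (SR y + (mR y - a)^2 + dt * (nR y / dt - b)^2)"
    using e by (simp add: SR_def mR_def nR_def)
  show "0 \<le> SR y"
    using e2 by (simp add: SR_def mR_def nR_def)
qed

lemma reg_I:
  assumes "good y"
  shows "(\<integral>\<^sup>+w. ennreal ((AI y w - a - b * w)^2) \<partial>gauss dt) = ennreal (SI y + (mI y - a)^2 + dt * (nI y / dt - b)^2)"
    and "0 \<le> SI y"
proof -
  have mA: "AI y \<in> borel_measurable (gauss dt)" using measurable_Pair2[OF AI_pm, of y] by simp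
  note w = gauss_w[OF dt]
  note gi = good_int[OF assms]
  have e: "(\<integral>\<^sup>+w. ennreal ((AI y w - a - b * w)^2) \<partial>gauss dt) = ennreal ((G.expectation (\<lambda>\<omega>. (AI y \<omega>)^2) - (G.expectation (AI y))^2 - (G.expectation (\<lambda>\<omega>. AI y \<omega> * \<omega>))^2 / dt)
        + (G.expectation (AI y) - a)^2 + dt * (G.expectation (\<lambda>\<omega>. AI y \<omega> * \<omega>) / dt - b)^2)"
    by (rule G.regression[of "AI y" "\<lambda>w. w" dt a b], rule mA, simp, rule gi(10), rule w(3), rule w(2), rule w(4), rule dt)
  have e2: "0 \<le> G.expectation (\<lambda>\<omega>. (AI y \<omega>)^2) - (G.expectation (AI y))^2 - (G.expectation (\<lambda>\<omega>. AI y \<omega> * \<omega>))^2 / dt"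
    by (rule G.regression_nonneg[of "AI y" "\<lambda>w. w" dt], rule mA, simp, rule gi(10), rule w(3), rule w(2), rule w(4), rule dt)
  show "(\<integral>\<^sup>+w. ennreal ((AI y w - a - b * w)^2) \<partial>gauss dt) = ennreal (SI y + (mI y - a)^2 + dt * (nI y / dt - b)^2)"
    using e by (simp add: SI_def mI_def nI_def)
  show "0 \<le> SI y"
    using e2 by (simp add: SI_def mI_def nI_def)
qed


definition aR where "aR U y = Re (U y) + Im (f (real j * dt) y (U y)) * dt"
definition aI where "aI U y = Im (U y) - Re (f (real j * dt) y (U y)) * dt"
definition bR where "bR Z y = sqrt nu / 2 * (Re (Z y) - Im (Z y))"
definition bI where "bI Z y = sqrt nu / 2 * (Re (Z y) + Im (Z y))"
definition S where "S y = SR y + SI y"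
definition PU where "PU U y = (mR y - aR U y)^2 + (mI y - aI U y)^2"
definition QZ where "QZ Z y = (nR y / dt - bR Z y)^2 + (nI y / dt - bI Z y)^2"

lemma loss_inner:
  assumes [measurable]: "U \<in> borel_measurable borel" "Z \<in> borel_measurable borel"
  shows "loss nu dt f x j Up Zp U Z = (\<integral>\<^sup>+om. (\<integral>\<^sup>+w. ennreal ((AR (Xp nu x j om) w - aR U (Xp nu x j om) - bR Z (Xp nu x j om) * w)^2)
            + ennreal ((AI (Xp nu x j om) w - aI U (Xp nu x j om) - bI Z (Xp nu x j om) * w)^2) \<partial>gauss dt) \<partial>incr_space dt j)"
proof -
  have [measurable]: "Xp nu x j \<in> borel_measurable (incr_space dt (Suc j))" by (rule Xp_meas) simp
  have [measurable]: "Xp nu x (Suc j) \<in> borel_measurable (incr_space dt (Suc j))" by (rule Xp_meas) simp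
  have [measurable]: "(\<lambda>om. om j) \<in> borel_measurable (incr_space dt (Suc j))" by (rule comp_meas) simp
  define X where "X = Xp nu x j"
  define X1 where "X1 = Xp nu x (Suc j)"
  define tj where "tj = real j * dt"
  define FR where "FR = (\<lambda>om. Re (U (X om))
                 + sqrt nu / 2 * (Re (Zp (X1 om)) + Im (Zp (X1 om))) * om j
                 + sqrt nu / 2 * (Re (Z (X om)) - Im (Z (X om))) * om j
                 + Im (f tj (X om) (U (X om))) * dt)"
  define FI where "FI = (\<lambda>om. Im (U (X om))
                 - sqrt nu / 2 * (Re (Zp (X1 om)) - Im (Zp (X1 om))) * om j
                 + sqrt nu / 2 * (Re (Z (X om)) + Im (Z (X om))) * om j
                 - Re (f tj (X om) (U (X om))) * dt)"
  have [measurable]: "X \<in> borel_measurable (incr_space dt (Suc j))" "X1 \<in> borel_measurable (incr_space dt (Suc j))"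
    unfolding X_def X1_def by measurable
  have [measurable]: "FR \<in> borel_measurable (incr_space dt (Suc j))" "FI \<in> borel_measurable (incr_space dt (Suc j))"
    unfolding FR_def FI_def tj_def by measurable
  have "loss nu dt f x j Up Zp U Z = (\<integral>\<^sup>+om. ennreal ((Re (Up (X1 om)) - FR om)^2) \<partial>incr_space dt (Suc j))
      + (\<integral>\<^sup>+om. ennreal ((Im (Up (X1 om)) - FI om)^2) \<partial>incr_space dt (Suc j))"
    unfolding loss_def Let_def X_def X1_def FR_def FI_def tj_def ..
  also have "\<dots> = (\<integral>\<^sup>+om. ennreal ((Re (Up (X1 om)) - FR om)^2) + ennreal ((Im (Up (X1 om)) - FI om)^2) \<partial>incr_space dt (Suc j))"
    by (rule nn_integral_add[symmetric]) measurable
  also have "\<dots> = (\<integral>\<^sup>+om. (\<integral>\<^sup>+w. ennreal ((Re (Up (X1 (om(j:=w)))) - FR (om(j:=w)))^2) + ennreal ((Im (Up (X1 (om(j:=w)))) - FI (om(j:=w)))^2) \<partial>gauss dt) \<partial>incr_space dt j)"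
    by (rule incr_split[OF dt]) measurable
  also have "\<dots> = (\<integral>\<^sup>+om. (\<integral>\<^sup>+w. ennreal ((AR (Xp nu x j om) w - aR U (Xp nu x j om) - bR Z (Xp nu x j om) * w)^2)
            + ennreal ((AI (Xp nu x j om) w - aI U (Xp nu x j om) - bI Z (Xp nu x j om) * w)^2) \<partial>gauss dt) \<partial>incr_space dt j)"
  proof (intro nn_integral_cong)
    fix om w
    have "Re (Up (X1 (om(j:=w)))) - FR (om(j:=w)) = AR (Xp nu x j om) w - aR U (Xp nu x j om) - bR Z (Xp nu x j om) * w"
      unfolding FR_def X_def X1_def Xp_upd_same Xp_upd_Suc AR_def aR_def bR_def tj_def by (simp add: algebra_simps)
    moreover have "Im (Up (X1 (om(j:=w)))) - FI (om(j:=w)) = AI (Xp nu x j om) w - aI U (Xp nu x j om) - bI Z (Xp nu x j om) * w"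
      unfolding FI_def X_def X1_def Xp_upd_same Xp_upd_Suc AI_def aI_def bI_def tj_def by (simp add: algebra_simps)
    ultimately show "ennreal ((Re (Up (X1 (om(j:=w)))) - FR (om(j:=w)))^2) + ennreal ((Im (Up (X1 (om(j:=w)))) - FI (om(j:=w)))^2)
      = ennreal ((AR (Xp nu x j om) w - aR U (Xp nu x j om) - bR Z (Xp nu x j om) * w)^2)
            + ennreal ((AI (Xp nu x j om) w - aI U (Xp nu x j om) - bI Z (Xp nu x j om) * w)^2)" by simp
  qed
  finally show ?thesis .
qed


lemma aR_m[measurable]: assumes [measurable]: "U \<in> borel_measurable borel" shows "aR U \<in> borel_measurable borel"
  unfolding aR_def[abs_def] by measurable
lemma aI_m[measurable]: assumes [measurable]: "U \<in> borel_measurable borel" shows "aI U \<in> borel_measurable borel"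
  unfolding aI_def[abs_def] by measurable
lemma bR_m[measurable]: assumes [measurable]: "Z \<in> borel_measurable borel" shows "bR Z \<in> borel_measurable borel"
  unfolding bR_def[abs_def] by measurable
lemma bI_m[measurable]: assumes [measurable]: "Z \<in> borel_measurable borel" shows "bI Z \<in> borel_measurable borel"
  unfolding bI_def[abs_def] by measurable
lemma S_m[measurable]: "S \<in> borel_measurable borel"
  unfolding S_def[abs_def] by measurable
lemma PU_m[measurable]: assumes [measurable]: "U \<in> borel_measurable borel" shows "PU U \<in> borel_measurable borel"
  unfolding PU_def[abs_def] by measurable
lemma QZ_m[measurable]: assumes [measurable]: "Z \<in> borel_measurable borel" shows "QZ Z \<in> borel_measurable borel"
  unfolding QZ_def[abs_def] by measurable

lemma inner_good:
  assumes "good y"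
  shows "(\<integral>\<^sup>+w. ennreal ((AR y w - aR U y - bR Z y * w)^2) + ennreal ((AI y w - aI U y - bI Z y * w)^2) \<partial>gauss dt)
     = ennreal (S y) + ennreal (PU U y) + ennreal dt * ennreal (QZ Z y)"
proof -
  have mR': "AR y \<in> borel_measurable (gauss dt)" using measurable_Pair2[OF AR_pm, of y] by simp
  have mI': "AI y \<in> borel_measurable (gauss dt)" using measurable_Pair2[OF AI_pm, of y] by simp
  have "(\<integral>\<^sup>+w. ennreal ((AR y w - aR U y - bR Z y * w)^2) + ennreal ((AI y w - aI U y - bI Z y * w)^2) \<partial>gauss dt)
     = (\<integral>\<^sup>+w. ennreal ((AR y w - aR U y - bR Z y * w)^2) \<partial>gauss dt) + (\<integral>\<^sup>+w. ennreal ((AI y w - aI U y - bI Z y * w)^2) \<partial>gauss dt)"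
    by (rule nn_integral_add) (use mR' mI' in measurable)
  also have "\<dots> = ennreal (SR y + (mR y - aR U y)^2 + dt * (nR y / dt - bR Z y)^2) + ennreal (SI y + (mI y - aI U y)^2 + dt * (nI y / dt - bI Z y)^2)"
    by (simp only: reg_R(1)[OF assms] reg_I(1)[OF assms])
  also have "\<dots> = ennreal (SR y + (mR y - aR U y)^2 + dt * (nR y / dt - bR Z y)^2 + (SI y + (mI y - aI U y)^2 + dt * (nI y / dt - bI Z y)^2))"
    using reg_R(2)[OF assms] reg_I(2)[OF assms] dt by (intro ennreal_plus[symmetric]) auto
  also have "SR y + (mR y - aR U y)^2 + dt * (nR y / dt - bR Z y)^2 + (SI y + (mI y - aI U y)^2 + dt * (nI y / dt - bI Z y)^2)
     = S y + PU U y + dt * QZ Z y"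
    unfolding S_def PU_def QZ_def by (simp add: algebra_simps)
  also have "ennreal (S y + PU U y + dt * QZ Z y) = ennreal (S y) + ennreal (PU U y) + ennreal dt * ennreal (QZ Z y)"
    using reg_R(2)[OF assms] reg_I(2)[OF assms] dt
    by (simp add: S_def PU_def QZ_def ennreal_plus ennreal_mult)
  finally show ?thesis .
qed

lemma loss_decomp:
  assumes [measurable]: "U \<in> borel_measurable borel" "Z \<in> borel_measurable borel"
  shows "loss nu dt f x j Up Zp U Z = (\<integral>\<^sup>+om. ennreal (S (Xp nu x j om)) \<partial>incr_space dt j)
     + (\<integral>\<^sup>+om. ennreal (PU U (Xp nu x j om)) \<partial>incr_space dt j) + ennreal dt * (\<integral>\<^sup>+om. ennreal (QZ Z (Xp nu x j om)) \<partial>incr_space dt j)"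
proof -
  have [measurable]: "Xp nu x j \<in> borel_measurable (incr_space dt j)" by (rule Xp_meas) simp
  have "loss nu dt f x j Up Zp U Z = (\<integral>\<^sup>+om. ennreal (S (Xp nu x j om)) + ennreal (PU U (Xp nu x j om)) + ennreal dt * ennreal (QZ Z (Xp nu x j om)) \<partial>incr_space dt j)"
    unfolding loss_inner[OF assms]
    by (rule nn_integral_cong_AE) (use AE_good in \<open>eventually_elim\<close>, rule inner_good)
  also have "\<dots> = (\<integral>\<^sup>+om. ennreal (S (Xp nu x j om)) + ennreal (PU U (Xp nu x j om)) \<partial>incr_space dt j) + (\<integral>\<^sup>+om. ennreal dt * ennreal (QZ Z (Xp nu x j om)) \<partial>incr_space dt j)"
    by (rule nn_integral_add) measurable
  also have "\<dots> = (\<integral>\<^sup>+om. ennreal (S (Xp nu x j om)) \<partial>incr_space dt j) + (\<integral>\<^sup>+om. ennreal (PU U (Xp nu x j om)) \<partial>incr_space dt j) + ennreal dt * (\<integral>\<^sup>+om. ennreal (QZ Z (Xp nu x j om)) \<partial>incr_space dt j)"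
    by (subst nn_integral_add, measurable, subst nn_integral_cmult, measurable)
  finally show ?thesis .
qed


lemma inner_bound:
  "(AR y w - aR U y - bR Z y * w)^2 + (AI y w - aI U y - bI Z y * w)^2 \<le>
     6 * (cmod (Up (y + sqrt nu * w)))^2 + 3 * nu * ((cmod (Zp (y + sqrt nu * w)))^2 * w^2)
     + (6 + 12 * dt^2 * L^2) * (cmod (U y))^2 + 12 * dt^2 * c0^2 + 2 * nu * ((cmod (Z y))^2 * w^2)"
proof -
  let ?F = "f (real j * dt) y (U y)"
  have r: "(AR y w - aR U y - bR Z y * w)^2 \<le> 3 * (AR y w)^2 + 3 * (aR U y)^2 + 3 * (bR Z y * w)^2" by (rule sq3)
  have i: "(AI y w - aI U y - bI Z y * w)^2 \<le> 3 * (AI y w)^2 + 3 * (aI U y)^2 + 3 * (bI Z y * w)^2" by (rule sq3)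
  have A: "(AR y w)^2 + (AI y w)^2 \<le> 2 * (Re (Up (y + sqrt nu * w)))^2 + 2 * (Im (Up (y + sqrt nu * w)))^2
      + nu * ((Re (Zp (y + sqrt nu * w)))^2 + (Im (Zp (y + sqrt nu * w)))^2) * w^2"
    unfolding AR_def AI_def by (rule ARAI_bound) (use nu in simp)
  have A2: "(AR y w)^2 + (AI y w)^2 \<le> 2 * (cmod (Up (y + sqrt nu * w)))^2 + nu * ((cmod (Zp (y + sqrt nu * w)))^2 * w^2)"
    using A by (simp add: cmod_power2 algebra_simps)
  have a1: "(aR U y)^2 \<le> 2 * (Re (U y))^2 + 2 * (Im ?F * dt)^2" unfolding aR_def by (rule sq2)
  have a2: "(aI U y)^2 \<le> 2 * (Im (U y))^2 + 2 * (Re ?F * dt)^2"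
    unfolding aI_def using sq2[of "Im (U y)" "- (Re ?F * dt)"] by simp
  have a3: "2 * (Im ?F * dt)^2 + 2 * (Re ?F * dt)^2 = 2 * dt^2 * (cmod ?F)^2"
    by (simp add: cmod_power2 power_mult_distrib algebra_simps)
  have Fb: "(cmod ?F)^2 \<le> 2 * c0^2 + 2 * L^2 * (cmod (U y))^2"
    by (rule F_sq[OF F_bd c0]) (use Lpos in simp)
  have a4: "2 * dt^2 * (cmod ?F)^2 \<le> 2 * dt^2 * (2 * c0^2 + 2 * L^2 * (cmod (U y))^2)"
    by (rule mult_left_mono[OF Fb]) simp
  have a5: "2 * dt^2 * (2 * c0^2 + 2 * L^2 * (cmod (U y))^2) = 4 * dt^2 * c0^2 + 4 * dt^2 * L^2 * (cmod (U y))^2"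
    by (simp add: algebra_simps)
  have a6: "(Re (U y))^2 + (Im (U y))^2 = (cmod (U y))^2" by (simp add: cmod_power2)
  have b: "(bR Z y * w)^2 + (bI Z y * w)^2 = nu / 2 * ((cmod (Z y))^2 * w^2)"
  proof -
    have p1: "(bR Z y * w)^2 = nu / 4 * ((Re (Z y) - Im (Z y))^2 * w^2)"
      unfolding bR_def using nu by (simp add: power_mult_distrib power_divide)
    have p2: "(bI Z y * w)^2 = nu / 4 * ((Re (Z y) + Im (Z y))^2 * w^2)"
      unfolding bI_def using nu by (simp add: power_mult_distrib power_divide)
    show ?thesis unfolding p1 p2 cmod_power2
      by (simp add: power2_eq_square field_simps)
  qed
  have b2: "nu / 2 * ((cmod (Z y))^2 * w^2) \<le> nu * ((cmod (Z y))^2 * w^2)"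
    using nu by (intro mult_right_mono) auto
  have e1: "(6 + 12 * dt^2 * L^2) * (cmod (U y))^2 = 6 * (cmod (U y))^2 + 3 * (4 * dt^2 * L^2 * (cmod (U y))^2)"
    by (simp add: algebra_simps)
  have e2: "12 * dt^2 * c0^2 = 3 * (4 * dt^2 * c0^2)" by simp
  show ?thesis using r i A2 a1 a2 a3 a4 a5 a6 b b2 e1 e2 by linarith
qed

lemma I1_meas: "(\<lambda>om. \<integral>\<^sup>+w. ennreal ((cmod (Up (Xp nu x j om + sqrt nu * w)))^2) \<partial>gauss dt) \<in> borel_measurable (incr_space dt j)"
  proof (rule G.borel_measurable_nn_integral)
  have "(\<lambda>z. ennreal ((cmod (Up z))^2)) \<circ> (\<lambda>(om, w). Xp nu x j om + sqrt nu * w) \<in> borel_measurable (incr_space dt j \<Otimes>\<^sub>M gauss dt)"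
    by (rule measurable_comp[OF X_comp_meas]) measurable
  then show "(\<lambda>(om, w). ennreal ((cmod (Up (Xp nu x j om + sqrt nu * w)))^2)) \<in> borel_measurable (incr_space dt j \<Otimes>\<^sub>M gauss dt)"
    by (simp add: comp_def case_prod_beta')
qed

lemma I2_meas: "(\<lambda>om. \<integral>\<^sup>+w. ennreal ((cmod (Zp (Xp nu x j om + sqrt nu * w)))^2 * w^2) \<partial>gauss dt) \<in> borel_measurable (incr_space dt j)"
  proof (rule G.borel_measurable_nn_integral)
  have a: "(\<lambda>p. Xp nu x j (fst p) + sqrt nu * snd p) \<in> borel_measurable (incr_space dt j \<Otimes>\<^sub>M gauss dt)"
    using X_comp_meas by (simp add: case_prod_beta')
  have "(\<lambda>p. ennreal ((cmod (Zp (Xp nu x j (fst p) + sqrt nu * snd p)))^2 * (snd p)^2)) \<in> borel_measurable (incr_space dt j \<Otimes>\<^sub>M gauss dt)"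
    using a by measurable
  then show "(\<lambda>(om, w). ennreal ((cmod (Zp (Xp nu x j om + sqrt nu * w)))^2 * w^2)) \<in> borel_measurable (incr_space dt j \<Otimes>\<^sub>M gauss dt)"
    by (simp add: case_prod_beta')
qed

lemma I1_fin: "(\<integral>\<^sup>+om. \<integral>\<^sup>+w. ennreal ((cmod (Up (Xp nu x j om + sqrt nu * w)))^2) \<partial>gauss dt \<partial>incr_space dt j) < \<infinity>"
proof -
  have "(\<integral>\<^sup>+om. \<integral>\<^sup>+w. ennreal ((cmod (Up (Xp nu x j om + sqrt nu * w)))^2) \<partial>gauss dt \<partial>incr_space dt j)
     = (\<integral>\<^sup>+om. ennreal ((cmod (Up (Xp nu x (Suc j) om)))^2) \<partial>incr_space dt (Suc j))"
    by (subst incr_split[OF dt]) (auto simp: Xp_upd_Suc intro!: Xp_meas)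
  with finU show "(\<integral>\<^sup>+om. \<integral>\<^sup>+w. ennreal ((cmod (Up (Xp nu x j om + sqrt nu * w)))^2) \<partial>gauss dt \<partial>incr_space dt j) < \<infinity>"
    by simp
qed

lemma I2_fin: "(\<integral>\<^sup>+om. \<integral>\<^sup>+w. ennreal ((cmod (Zp (Xp nu x j om + sqrt nu * w)))^2 * w^2) \<partial>gauss dt \<partial>incr_space dt j) < \<infinity>"
proof -
  have "(\<integral>\<^sup>+om. \<integral>\<^sup>+w. ennreal ((cmod (Zp (Xp nu x j om + sqrt nu * w)))^2 * w^2) \<partial>gauss dt \<partial>incr_space dt j)
     = (\<integral>\<^sup>+om. ennreal ((cmod (Zp (Xp nu x (Suc j) om)))^2 * (om j)^2) \<partial>incr_space dt (Suc j))"
  proof (subst incr_split[OF dt])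
    show "(\<lambda>om. ennreal ((cmod (Zp (Xp nu x (Suc j) om)))^2 * (om j)^2)) \<in> borel_measurable (incr_space dt (Suc j))"
      using Xp_meas[of "Suc j" "Suc j" nu x dt] comp_meas[of j "Suc j" dt] by measurable
  qed (auto simp: Xp_upd_Suc)
  with finZ show "(\<integral>\<^sup>+om. \<integral>\<^sup>+w. ennreal ((cmod (Zp (Xp nu x j om + sqrt nu * w)))^2 * w^2) \<partial>gauss dt \<partial>incr_space dt j) < \<infinity>"
    by simp
qed

lemma loss_fin:
  assumes [measurable]: "U \<in> borel_measurable borel" "Z \<in> borel_measurable borel"
    and fU: "(\<integral>\<^sup>+om. ennreal ((cmod (U (Xp nu x j om)))^2) \<partial>incr_space dt j) < \<infinity>"
    and fZ: "(\<integral>\<^sup>+om. ennreal ((cmod (Z (Xp nu x j om)))^2) \<partial>incr_space dt j) < \<infinity>"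
  shows "loss nu dt f x j Up Zp U Z < \<infinity>"
proof -
  interpret P: prob_space "incr_space dt j" using incr_prob[OF dt] .
  have [measurable]: "Xp nu x j \<in> borel_measurable (incr_space dt j)" by (rule Xp_meas) simp
  note I1m = I1_meas and I2m = I2_meas
  define K1 where "K1 = 6 + 12 * dt^2 * L^2"
  define K0 where "K0 = 12 * dt^2 * c0^2"
  have K: "0 \<le> K1" "0 \<le> K0" unfolding K1_def K0_def by auto
  define e1 where "e1 om w = ennreal ((cmod (Up (Xp nu x j om + sqrt nu * w)))^2)" for om w
  define e2 where "e2 om w = ennreal ((cmod (Zp (Xp nu x j om + sqrt nu * w)))^2 * w^2)" for om w
  define cU where "cU om = ennreal (K1 * (cmod (U (Xp nu x j om)))^2 + K0)" for om
  define cZ where "cZ om = ennreal (2 * nu * (cmod (Z (Xp nu x j om)))^2)" for om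
  have [measurable]: "cU \<in> borel_measurable (incr_space dt j)" "cZ \<in> borel_measurable (incr_space dt j)"
    unfolding cU_def[abs_def] cZ_def[abs_def] by measurable
  have e1m: "e1 om \<in> borel_measurable (gauss dt)" for om unfolding e1_def by measurable
  have e2m: "e2 om \<in> borel_measurable (gauss dt)" for om unfolding e2_def by measurable
  have pw: "ennreal ((AR (Xp nu x j om) w - aR U (Xp nu x j om) - bR Z (Xp nu x j om) * w)^2)
            + ennreal ((AI (Xp nu x j om) w - aI U (Xp nu x j om) - bI Z (Xp nu x j om) * w)^2)
     \<le> ennreal 6 * e1 om w + ennreal (3 * nu) * e2 om w + cU om + cZ om * ennreal (w^2)" for om w
  proof -
    let ?y = "Xp nu x j om"
    have "ennreal ((AR ?y w - aR U ?y - bR Z ?y * w)^2) + ennreal ((AI ?y w - aI U ?y - bI Z ?y * w)^2)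
        = ennreal ((AR ?y w - aR U ?y - bR Z ?y * w)^2 + (AI ?y w - aI U ?y - bI Z ?y * w)^2)"
      by (rule ennreal_plus[symmetric]) auto
    also have "\<dots> \<le> ennreal (6 * (cmod (Up (?y + sqrt nu * w)))^2 + 3 * nu * ((cmod (Zp (?y + sqrt nu * w)))^2 * w^2)
     + (K1 * (cmod (U ?y))^2 + K0) + 2 * nu * (cmod (Z ?y))^2 * w^2)"
      using inner_bound[of ?y w U Z] unfolding K1_def K0_def by (intro ennreal_leI) (simp add: algebra_simps)
    also have "\<dots> = ennreal 6 * e1 om w + ennreal (3 * nu) * e2 om w + cU om + cZ om * ennreal (w^2)"
      unfolding e1_def e2_def cU_def cZ_def using nu K
      by (simp add: ennreal_plus ennreal_mult mult.assoc del: ennreal_numeral)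
    finally show ?thesis .
  qed
  have w2: "(\<integral>\<^sup>+w. ennreal (w^2) \<partial>gauss dt) = ennreal dt"
    using nn_integral_eq_integral[OF gauss_w(3)[OF dt]] gauss_w(4)[OF dt] by simp
  have inner: "(\<integral>\<^sup>+w. ennreal 6 * e1 om w + ennreal (3 * nu) * e2 om w + cU om + cZ om * ennreal (w^2) \<partial>gauss dt)
     = ennreal 6 * (\<integral>\<^sup>+w. e1 om w \<partial>gauss dt) + ennreal (3 * nu) * (\<integral>\<^sup>+w. e2 om w \<partial>gauss dt) + cU om + cZ om * ennreal dt" for om
    using e1m[of om] e2m[of om]
    using G.emeasure_space_1 by (simp add: nn_integral_add nn_integral_cmult w2[symmetric])
  have "loss nu dt f x j Up Zp U Z \<le> (\<integral>\<^sup>+om. (\<integral>\<^sup>+w. ennreal 6 * e1 om w + ennreal (3 * nu) * e2 om w + cU om + cZ om * ennreal (w^2) \<partial>gauss dt) \<partial>incr_space dt j)"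
    unfolding loss_inner[OF assms(1,2)]
    by (intro nn_integral_mono pw)
  also have "\<dots> = (\<integral>\<^sup>+om. ennreal 6 * (\<integral>\<^sup>+w. e1 om w \<partial>gauss dt) + ennreal (3 * nu) * (\<integral>\<^sup>+w. e2 om w \<partial>gauss dt) + cU om + cZ om * ennreal dt \<partial>incr_space dt j)"
    by (simp only: inner)
  also have "\<dots> = ennreal 6 * (\<integral>\<^sup>+om. (\<integral>\<^sup>+w. e1 om w \<partial>gauss dt) \<partial>incr_space dt j) + ennreal (3 * nu) * (\<integral>\<^sup>+om. (\<integral>\<^sup>+w. e2 om w \<partial>gauss dt) \<partial>incr_space dt j)
       + (\<integral>\<^sup>+om. cU om \<partial>incr_space dt j) + (\<integral>\<^sup>+om. cZ om \<partial>incr_space dt j) * ennreal dt"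
    using I1m I2m unfolding e1_def e2_def
    by (simp add: nn_integral_add nn_integral_cmult nn_integral_multc)
  also have "\<dots> < \<infinity>"
  proof -
    have "(\<integral>\<^sup>+om. cU om \<partial>incr_space dt j) = ennreal K1 * (\<integral>\<^sup>+om. ennreal ((cmod (U (Xp nu x j om)))^2) \<partial>incr_space dt j) + ennreal K0"
      unfolding cU_def using K
      by (simp add: ennreal_plus ennreal_mult nn_integral_add nn_integral_cmult P.emeasure_space_1)
    then have a: "(\<integral>\<^sup>+om. cU om \<partial>incr_space dt j) < \<infinity>" using fU by (simp add: ennreal_mult_less_top)
    have "(\<integral>\<^sup>+om. cZ om \<partial>incr_space dt j) = ennreal (2 * nu) * (\<integral>\<^sup>+om. ennreal ((cmod (Z (Xp nu x j om)))^2) \<partial>incr_space dt j)"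
      unfolding cZ_def using nu
      by (simp add: ennreal_mult nn_integral_cmult)
    then have b: "(\<integral>\<^sup>+om. cZ om \<partial>incr_space dt j) < \<infinity>" using fZ by (simp add: ennreal_mult_less_top)
    show ?thesis using a b I1_fin I2_fin unfolding e1_def e2_def
      by (simp add: ennreal_mult_less_top)
  qed
  finally show ?thesis .
qed

lemma integrals_good:
  assumes "good y"
  shows "mR y = condE nu dt (\<lambda>z w. Re (Up z)) y - sqrt nu / 2 * condE nu dt (\<lambda>z w. (Re (Zp z) + Im (Zp z)) * w) y"
    "mI y = condE nu dt (\<lambda>z w. Im (Up z)) y + sqrt nu / 2 * condE nu dt (\<lambda>z w. (Re (Zp z) - Im (Zp z)) * w) y"
    "nR y = (\<integral>w. Re (Up (y + sqrt nu * w)) * w \<partial>gauss dt) - sqrt nu / 2 * ((\<integral>w. Re (Zp (y + sqrt nu * w)) * w^2 \<partial>gauss dt) + (\<integral>w. Im (Zp (y + sqrt nu * w)) * w^2 \<partial>gauss dt))"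
    "nI y = (\<integral>w. Im (Up (y + sqrt nu * w)) * w \<partial>gauss dt) + sqrt nu / 2 * ((\<integral>w. Re (Zp (y + sqrt nu * w)) * w^2 \<partial>gauss dt) - (\<integral>w. Im (Zp (y + sqrt nu * w)) * w^2 \<partial>gauss dt))"
    "condE nu dt (\<lambda>z w. (Re (Up z) + Im (Up z)) * w) y = (\<integral>w. Re (Up (y + sqrt nu * w)) * w \<partial>gauss dt) + (\<integral>w. Im (Up (y + sqrt nu * w)) * w \<partial>gauss dt)"
    "condE nu dt (\<lambda>z w. (Im (Up z) - Re (Up z)) * w) y = (\<integral>w. Im (Up (y + sqrt nu * w)) * w \<partial>gauss dt) - (\<integral>w. Re (Up (y + sqrt nu * w)) * w \<partial>gauss dt)"
    "condE nu dt (\<lambda>z w. Im (Zp z) * w^2) y = (\<integral>w. Im (Zp (y + sqrt nu * w)) * w^2 \<partial>gauss dt)"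
    "condE nu dt (\<lambda>z w. Re (Zp z) * w^2) y = (\<integral>w. Re (Zp (y + sqrt nu * w)) * w^2 \<partial>gauss dt)"
proof -
  note gi = good_int[OF assms]
  let ?u1 = "\<lambda>w. Re (Up (y + sqrt nu * w))" and ?u2 = "\<lambda>w. Im (Up (y + sqrt nu * w))"
  let ?z1 = "\<lambda>w. Re (Zp (y + sqrt nu * w))" and ?z2 = "\<lambda>w. Im (Zp (y + sqrt nu * w))"
  have iz12p: "integrable (gauss dt) (\<lambda>w. ?z1 w * w + ?z2 w * w)" using gi(5) gi(6) by (rule Bochner_Integration.integrable_add)
  have iz12m: "integrable (gauss dt) (\<lambda>w. ?z1 w * w - ?z2 w * w)" using gi(5) gi(6) by (rule Bochner_Integration.integrable_diff)
  have cz12p: "condE nu dt (\<lambda>z w. (Re (Zp z) + Im (Zp z)) * w) y = (\<integral>w. ?z1 w * w \<partial>gauss dt) + (\<integral>w. ?z2 w * w \<partial>gauss dt)"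
    unfolding condE_def by (subst Bochner_Integration.integral_add[OF gi(5) gi(6), symmetric]) (simp add: algebra_simps)
  have cz12m: "condE nu dt (\<lambda>z w. (Re (Zp z) - Im (Zp z)) * w) y = (\<integral>w. ?z1 w * w \<partial>gauss dt) - (\<integral>w. ?z2 w * w \<partial>gauss dt)"
    unfolding condE_def by (subst Bochner_Integration.integral_diff[OF gi(5) gi(6), symmetric]) (simp add: algebra_simps)
  have "mR y = (\<integral>w. ?u1 w - sqrt nu / 2 * (?z1 w * w + ?z2 w * w) \<partial>gauss dt)"
    unfolding mR_def AR_def by (simp add: algebra_simps)
  also have "\<dots> = (\<integral>w. ?u1 w \<partial>gauss dt) - sqrt nu / 2 * ((\<integral>w. ?z1 w * w \<partial>gauss dt) + (\<integral>w. ?z2 w * w \<partial>gauss dt))"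
    using gi(1) iz12p gi(5) gi(6) by (simp add: Bochner_Integration.integral_diff Bochner_Integration.integral_add)
  finally show "mR y = condE nu dt (\<lambda>z w. Re (Up z)) y - sqrt nu / 2 * condE nu dt (\<lambda>z w. (Re (Zp z) + Im (Zp z)) * w) y"
    unfolding cz12p by (simp add: condE_def)
  have "mI y = (\<integral>w. ?u2 w + sqrt nu / 2 * (?z1 w * w - ?z2 w * w) \<partial>gauss dt)"
    unfolding mI_def AI_def by (simp add: algebra_simps)
  also have "\<dots> = (\<integral>w. ?u2 w \<partial>gauss dt) + sqrt nu / 2 * ((\<integral>w. ?z1 w * w \<partial>gauss dt) - (\<integral>w. ?z2 w * w \<partial>gauss dt))"
    using gi(2) iz12m gi(5) gi(6) by (simp add: Bochner_Integration.integral_diff Bochner_Integration.integral_add)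
  finally show "mI y = condE nu dt (\<lambda>z w. Im (Up z)) y + sqrt nu / 2 * condE nu dt (\<lambda>z w. (Re (Zp z) - Im (Zp z)) * w) y"
    unfolding cz12m by (simp add: condE_def)
  have iw2p: "integrable (gauss dt) (\<lambda>w. ?z1 w * w^2 + ?z2 w * w^2)" using gi(7) gi(8) by (rule Bochner_Integration.integrable_add)
  have iw2m: "integrable (gauss dt) (\<lambda>w. ?z1 w * w^2 - ?z2 w * w^2)" using gi(7) gi(8) by (rule Bochner_Integration.integrable_diff)
  have "nR y = (\<integral>w. ?u1 w * w - sqrt nu / 2 * (?z1 w * w^2 + ?z2 w * w^2) \<partial>gauss dt)"
    unfolding nR_def AR_def by (simp add: algebra_simps power2_eq_square)
  also have "\<dots> = (\<integral>w. ?u1 w * w \<partial>gauss dt) - sqrt nu / 2 * ((\<integral>w. ?z1 w * w^2 \<partial>gauss dt) + (\<integral>w. ?z2 w * w^2 \<partial>gauss dt))"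
    using gi(3) iw2p gi(7) gi(8) by (simp add: Bochner_Integration.integral_diff Bochner_Integration.integral_add)
  finally show "nR y = (\<integral>w. ?u1 w * w \<partial>gauss dt) - sqrt nu / 2 * ((\<integral>w. ?z1 w * w^2 \<partial>gauss dt) + (\<integral>w. ?z2 w * w^2 \<partial>gauss dt))" .
  have "nI y = (\<integral>w. ?u2 w * w + sqrt nu / 2 * (?z1 w * w^2 - ?z2 w * w^2) \<partial>gauss dt)"
    unfolding nI_def AI_def by (simp add: algebra_simps power2_eq_square)
  also have "\<dots> = (\<integral>w. ?u2 w * w \<partial>gauss dt) + sqrt nu / 2 * ((\<integral>w. ?z1 w * w^2 \<partial>gauss dt) - (\<integral>w. ?z2 w * w^2 \<partial>gauss dt))"
    using gi(4) iw2m gi(7) gi(8) by (simp add: Bochner_Integration.integral_diff Bochner_Integration.integral_add)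
  finally show "nI y = (\<integral>w. ?u2 w * w \<partial>gauss dt) + sqrt nu / 2 * ((\<integral>w. ?z1 w * w^2 \<partial>gauss dt) - (\<integral>w. ?z2 w * w^2 \<partial>gauss dt))" .
  show "condE nu dt (\<lambda>z w. (Re (Up z) + Im (Up z)) * w) y = (\<integral>w. ?u1 w * w \<partial>gauss dt) + (\<integral>w. ?u2 w * w \<partial>gauss dt)"
    unfolding condE_def by (subst Bochner_Integration.integral_add[OF gi(3) gi(4), symmetric]) (simp add: algebra_simps)
  show "condE nu dt (\<lambda>z w. (Im (Up z) - Re (Up z)) * w) y = (\<integral>w. ?u2 w * w \<partial>gauss dt) - (\<integral>w. ?u1 w * w \<partial>gauss dt)"
    unfolding condE_def by (subst Bochner_Integration.integral_diff[OF gi(4) gi(3), symmetric]) (simp add: algebra_simps)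
  show "condE nu dt (\<lambda>z w. Im (Zp z) * w^2) y = (\<integral>w. ?z2 w * w^2 \<partial>gauss dt)"
    unfolding condE_def ..
  show "condE nu dt (\<lambda>z w. Re (Zp z) * w^2) y = (\<integral>w. ?z1 w * w^2 \<partial>gauss dt)"
    unfolding condE_def ..
qed

lemma PU_good:
  assumes g: "good y"
    and vR: "Re (v y) = condE nu dt (\<lambda>z w. Re (Up z)) y - sqrt nu / 2 * condE nu dt (\<lambda>z w. (Re (Zp z) + Im (Zp z)) * w) y - Im (f (real j * dt) y (v y)) * dt"
    and vI: "Im (v y) = condE nu dt (\<lambda>z w. Im (Up z)) y + sqrt nu / 2 * condE nu dt (\<lambda>z w. (Re (Zp z) - Im (Zp z)) * w) y + Re (f (real j * dt) y (v y)) * dt"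
  shows "PU U y = (cmod ((v y - U y) - \<i> * complex_of_real dt * (f (real j * dt) y (v y) - f (real j * dt) y (U y))))^2"
proof -
  have m1: "mR y = Re (v y) + Im (f (real j * dt) y (v y)) * dt" using integrals_good(1)[OF g] vR by linarith
  have m2: "mI y = Im (v y) - Re (f (real j * dt) y (v y)) * dt" using integrals_good(2)[OF g] vI by linarith
  show ?thesis unfolding PU_def aR_def aI_def m1 m2 cmod_power2
    by (simp add: algebra_simps)
qed

lemma PU_bounds:
  assumes "P = (cmod ((a - b) - \<i> * complex_of_real dt * (f (real j * dt) y a - f (real j * dt) y b)))^2"
  shows "(3/4)^2 * (cmod (a - b))^2 \<le> P" "P \<le> (5/4)^2 * (cmod (a - b))^2"
proof -
  let ?D = "f (real j * dt) y a - f (real j * dt) y b"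
  have D: "cmod ?D \<le> L * cmod (a - b)" by (rule F_lip)
  have n: "cmod (\<i> * complex_of_real dt * ?D) = dt * cmod ?D" using dt by (simp add: norm_mult)
  have D2: "dt * cmod ?D \<le> 1/4 * cmod (a - b)"
  proof -
    have "dt * cmod ?D \<le> dt * (L * cmod (a - b))" using D dt by (intro mult_left_mono) auto
    also have "\<dots> = (L * dt) * cmod (a - b)" by simp
    also have "\<dots> \<le> 1/4 * cmod (a - b)" using Ldt by (intro mult_right_mono) auto
    finally show ?thesis .
  qed
  have up: "cmod ((a - b) - \<i> * complex_of_real dt * ?D) \<le> 5/4 * cmod (a - b)"
    using norm_triangle_ineq4[of "a - b" "\<i> * complex_of_real dt * ?D"] n D2 by linarith
  have lo: "3/4 * cmod (a - b) \<le> cmod ((a - b) - \<i> * complex_of_real dt * ?D)"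
    using norm_triangle_ineq2[of "a - b" "\<i> * complex_of_real dt * ?D"] n D2 by linarith
  show "(3/4)^2 * (cmod (a - b))^2 \<le> P"
    unfolding assms power_mult_distrib[symmetric] by (rule power_mono[OF lo]) simp
  show "P \<le> (5/4)^2 * (cmod (a - b))^2"
    unfolding assms power_mult_distrib[symmetric] by (rule power_mono[OF up]) simp
qed

lemma QZ_good:
  assumes g: "good y"
    and wR: "Re (w y) = 1 / (dt * sqrt nu) * condE nu dt (\<lambda>z w. (Re (Up z) + Im (Up z)) * w) y
           - 1 / dt * condE nu dt (\<lambda>z w. Im (Zp z) * w\<^sup>2) y"
    and wI: "Im (w y) = 1 / (dt * sqrt nu) * condE nu dt (\<lambda>z w. (Im (Up z) - Re (Up z)) * w) y
           + 1 / dt * condE nu dt (\<lambda>z w. Re (Zp z) * w\<^sup>2) y"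
  shows "QZ Z y = nu / 2 * (cmod (w y - Z y))^2"
proof -
  note ig = integrals_good[OF g]
  define a3 where "a3 = (\<integral>w. Re (Up (y + sqrt nu * w)) * w \<partial>gauss dt)"
  define a4 where "a4 = (\<integral>w. Im (Up (y + sqrt nu * w)) * w \<partial>gauss dt)"
  define z7 where "z7 = (\<integral>w. Im (Zp (y + sqrt nu * w)) * w^2 \<partial>gauss dt)"
  define z8 where "z8 = (\<integral>w. Re (Zp (y + sqrt nu * w)) * w^2 \<partial>gauss dt)"
  have s: "0 < sqrt nu" using nu by simp
  have wR': "Re (w y) = (a3 + a4) / (dt * sqrt nu) - z7 / dt" using wR ig(5) ig(7) unfolding a3_def a4_def z7_def by simp
  have wI': "Im (w y) = (a4 - a3) / (dt * sqrt nu) + z8 / dt" using wI ig(6) ig(8) unfolding a3_def a4_def z8_def by simp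
  have n1: "nR y / dt = sqrt nu / 2 * (Re (w y) - Im (w y))"
    unfolding ig(3) wR' wI' a3_def[symmetric] z7_def[symmetric] z8_def[symmetric] using s dt
    by (simp add: field_simps)
  have n2: "nI y / dt = sqrt nu / 2 * (Re (w y) + Im (w y))"
    unfolding ig(4) wR' wI' a4_def[symmetric] z7_def[symmetric] z8_def[symmetric] using s dt
    by (simp add: field_simps)
  have sn: "(sqrt nu)^2 = nu" using nu by simp
  have alg: "(r/2*(a - b) - r/2*(c - d))^2 + (r/2*(a+b) - r/2*(c+d))^2 = r^2/2 * ((a - c)^2 + (b - d)^2)" for r a b c d :: real
    by (simp add: power2_eq_square field_simps)
  show ?thesis unfolding QZ_def n1 n2 bR_def bI_def cmod_power2
    using alg[of "sqrt nu" "Re (w y)" "Im (w y)" "Re (Z y)" "Im (Z y)"] sn by simp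
qed

lemma perx:
  fixes UNt :: "real \<Rightarrow> 'p \<Rightarrow> complex" and ZNt :: "real \<Rightarrow> 'q \<Rightarrow> complex"
  assumes xs: "xs \<in> PA" and es: "es \<in> PB"
    and UNm: "\<And>p. p \<in> PA \<Longrightarrow> (\<lambda>y. UNt y p) \<in> borel_measurable borel \<and> (\<integral>\<^sup>+om. ennreal ((cmod (UNt (Xp nu x j om) p))^2) \<partial>incr_space dt j) < \<infinity>"
    and ZNm: "\<And>q. q \<in> PB \<Longrightarrow> (\<lambda>y. ZNt y q) \<in> borel_measurable borel \<and> (\<integral>\<^sup>+om. ennreal ((cmod (ZNt (Xp nu x j om) q))^2) \<partial>incr_space dt j) < \<infinity>"
    and minimal: "\<And>p q. p \<in> PA \<Longrightarrow> q \<in> PB \<Longrightarrow> loss nu dt f x j Up Zp (\<lambda>y. UNt y xs) (\<lambda>y. ZNt y es) \<le> loss nu dt f x j Up Zp (\<lambda>y. UNt y p) (\<lambda>y. ZNt y q)"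
    and vR: "\<And>y. Re (v y) = condE nu dt (\<lambda>z w. Re (Up z)) y - sqrt nu / 2 * condE nu dt (\<lambda>z w. (Re (Zp z) + Im (Zp z)) * w) y - Im (f (real j * dt) y (v y)) * dt"
    and vI: "\<And>y. Im (v y) = condE nu dt (\<lambda>z w. Im (Up z)) y + sqrt nu / 2 * condE nu dt (\<lambda>z w. (Re (Zp z) - Im (Zp z)) * w) y + Re (f (real j * dt) y (v y)) * dt"
    and wR: "\<And>y. Re (w y) = 1 / (dt * sqrt nu) * condE nu dt (\<lambda>z w. (Re (Up z) + Im (Up z)) * w) y
           - 1 / dt * condE nu dt (\<lambda>z w. Im (Zp z) * w\<^sup>2) y"
    and wI: "\<And>y. Im (w y) = 1 / (dt * sqrt nu) * condE nu dt (\<lambda>z w. (Im (Up z) - Re (Up z)) * w) y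
           + 1 / dt * condE nu dt (\<lambda>z w. Re (Zp z) * w\<^sup>2) y"
  shows "\<And>p. p \<in> PA \<Longrightarrow> (\<integral>\<^sup>+om. ennreal ((cmod (v (Xp nu x j om) - UNt (Xp nu x j om) xs))^2) \<partial>incr_space dt j)
           \<le> 3 * (\<integral>\<^sup>+om. ennreal ((cmod (v (Xp nu x j om) - UNt (Xp nu x j om) p))^2) \<partial>incr_space dt j)"
    and "\<And>q. q \<in> PB \<Longrightarrow> (\<integral>\<^sup>+om. ennreal ((cmod (w (Xp nu x j om) - ZNt (Xp nu x j om) es))^2) \<partial>incr_space dt j)
           \<le> (\<integral>\<^sup>+om. ennreal ((cmod (w (Xp nu x j om) - ZNt (Xp nu x j om) q))^2) \<partial>incr_space dt j)"
proof -
  have [measurable]: "Xp nu x j \<in> borel_measurable (incr_space dt j)" by (rule Xp_meas) simp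
  let ?X = "Xp nu x j"
  let ?Us = "\<lambda>y. UNt y xs" and ?Zs = "\<lambda>y. ZNt y es"
  have Usm[measurable]: "?Us \<in> borel_measurable borel" using UNm[OF xs] by blast
  have Zsm[measurable]: "?Zs \<in> borel_measurable borel" using ZNm[OF es] by blast
  have Lfin: "loss nu dt f x j Up Zp ?Us ?Zs < \<infinity>"
    by (rule loss_fin) (use UNm[OF xs] ZNm[OF es] in auto)
  let ?S = "\<integral>\<^sup>+om. ennreal (S (?X om)) \<partial>incr_space dt j"
  let ?P = "\<lambda>U. \<integral>\<^sup>+om. ennreal (PU U (?X om)) \<partial>incr_space dt j"
  let ?Q = "\<lambda>Z. ennreal dt * (\<integral>\<^sup>+om. ennreal (QZ Z (?X om)) \<partial>incr_space dt j)"
  have dec: "loss nu dt f x j Up Zp ?Us ?Zs = ?S + ?P ?Us + ?Q ?Zs" by (rule loss_decomp) measurable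
  have Sfin: "?S < \<infinity>" and Pfin: "?P ?Us < \<infinity>" and Qfin: "?Q ?Zs < \<infinity>"
    using Lfin unfolding dec by (auto simp: less_top[symmetric])
  show "(\<integral>\<^sup>+om. ennreal ((cmod (v (?X om) - UNt (?X om) xs))^2) \<partial>incr_space dt j)
           \<le> 3 * (\<integral>\<^sup>+om. ennreal ((cmod (v (?X om) - UNt (?X om) p))^2) \<partial>incr_space dt j)" if p: "p \<in> PA" for p
  proof -
    let ?Up = "\<lambda>y. UNt y p"
    have Upm[measurable]: "?Up \<in> borel_measurable borel" using UNm[OF p] by blast
    have "loss nu dt f x j Up Zp ?Us ?Zs \<le> loss nu dt f x j Up Zp ?Up ?Zs" by (rule minimal[OF p es])
    also have "\<dots> = ?S + ?P ?Up + ?Q ?Zs" by (rule loss_decomp) measurable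
    finally have "?S + ?P ?Us + ?Q ?Zs \<le> ?S + ?P ?Up + ?Q ?Zs" unfolding dec .
    then have PP: "?P ?Us \<le> ?P ?Up" by (rule ennreal_cancel_mid[OF _ Sfin Qfin])
    have "(\<integral>\<^sup>+om. ennreal ((cmod (v (?X om) - UNt (?X om) xs))^2) \<partial>incr_space dt j)
        \<le> (\<integral>\<^sup>+om. ennreal (16/9) * ennreal (PU ?Us (?X om)) \<partial>incr_space dt j)"
    proof (rule nn_integral_mono_AE)
      show "AE om in incr_space dt j. ennreal ((cmod (v (?X om) - UNt (?X om) xs))^2) \<le> ennreal (16/9) * ennreal (PU ?Us (?X om))"
        using AE_good
      proof eventually_elim
        case (elim om)
        have "(3/4)^2 * (cmod (v (?X om) - UNt (?X om) xs))^2 \<le> PU ?Us (?X om)"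
          by (rule PU_bounds(1)[OF PU_good[where v=v, OF elim vR[of "Xp nu x j om"] vI[of "Xp nu x j om"]]])
        then have h: "(cmod (v (?X om) - UNt (?X om) xs))^2 \<le> 16/9 * PU ?Us (?X om)" by (simp add: field_simps)
        have pn: "0 \<le> PU ?Us (?X om)" by (simp add: PU_def)
        have "ennreal (16/9) * ennreal (PU ?Us (?X om)) = ennreal (16/9 * PU ?Us (?X om))"
          using pn by (rule ennreal_mult[symmetric, rotated]) simp
        then show ?case using h by (simp add: ennreal_leI)
      qed
    qed
    also have "\<dots> = ennreal (16/9) * ?P ?Us" by (rule nn_integral_cmult) measurable
    also have "\<dots> \<le> ennreal (16/9) * ?P ?Up" by (rule mult_left_mono[OF PP]) simp
    also have "?P ?Up \<le> (\<integral>\<^sup>+om. ennreal (25/16) * ennreal ((cmod (v (?X om) - UNt (?X om) p))^2) \<partial>incr_space dt j)"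
    proof (rule nn_integral_mono_AE)
      show "AE om in incr_space dt j. ennreal (PU ?Up (?X om)) \<le> ennreal (25/16) * ennreal ((cmod (v (?X om) - UNt (?X om) p))^2)"
        using AE_good
      proof eventually_elim
        case (elim om)
        have "PU ?Up (?X om) \<le> (5/4)^2 * (cmod (v (?X om) - UNt (?X om) p))^2"
          by (rule PU_bounds(2)[OF PU_good[where v=v, OF elim vR[of "Xp nu x j om"] vI[of "Xp nu x j om"]]])
        then have h: "PU ?Up (?X om) \<le> 25/16 * (cmod (v (?X om) - UNt (?X om) p))^2" by (simp add: power_divide)
        have "ennreal (25/16) * ennreal ((cmod (v (?X om) - UNt (?X om) p))^2) = ennreal (25/16 * (cmod (v (?X om) - UNt (?X om) p))^2)"
          by (rule ennreal_mult[symmetric]) auto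
        then show ?case using h by (simp add: ennreal_leI)
      qed
    qed
    also have "(\<integral>\<^sup>+om. ennreal (25/16) * ennreal ((cmod (v (?X om) - UNt (?X om) p))^2) \<partial>incr_space dt j)
        = ennreal (25/16) * (\<integral>\<^sup>+om. ennreal ((cmod (v (?X om) - UNt (?X om) p))^2) \<partial>incr_space dt j)"
      by (rule nn_integral_cmult_gen) simp
    finally have "(\<integral>\<^sup>+om. ennreal ((cmod (v (?X om) - UNt (?X om) xs))^2) \<partial>incr_space dt j)
        \<le> ennreal (16/9) * (ennreal (25/16) * (\<integral>\<^sup>+om. ennreal ((cmod (v (?X om) - UNt (?X om) p))^2) \<partial>incr_space dt j))"
      by (simp add: mult_left_mono)
    also have "\<dots> = ennreal (25/9) * (\<integral>\<^sup>+om. ennreal ((cmod (v (?X om) - UNt (?X om) p))^2) \<partial>incr_space dt j)"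
      by (simp add: mult.assoc[symmetric] ennreal_mult[symmetric])
    also have "\<dots> \<le> 3 * (\<integral>\<^sup>+om. ennreal ((cmod (v (?X om) - UNt (?X om) p))^2) \<partial>incr_space dt j)"
    proof (rule mult_right_mono)
      have "ennreal (25/9) \<le> ennreal 3" by (rule ennreal_leI) simp
      then show "ennreal (25/9) \<le> 3" by simp
    qed simp
    finally show ?thesis .
  qed
  show "(\<integral>\<^sup>+om. ennreal ((cmod (w (?X om) - ZNt (?X om) es))^2) \<partial>incr_space dt j)
           \<le> (\<integral>\<^sup>+om. ennreal ((cmod (w (?X om) - ZNt (?X om) q))^2) \<partial>incr_space dt j)" if q: "q \<in> PB" for q
  proof -
    let ?Zq = "\<lambda>y. ZNt y q"
    have Zqm[measurable]: "?Zq \<in> borel_measurable borel" using ZNm[OF q] by blast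
    have "loss nu dt f x j Up Zp ?Us ?Zs \<le> loss nu dt f x j Up Zp ?Us ?Zq" by (rule minimal[OF xs q])
    also have "\<dots> = ?S + ?P ?Us + ?Q ?Zq" by (rule loss_decomp) measurable
    finally have "?S + ?P ?Us + ?Q ?Zs \<le> ?S + ?P ?Us + ?Q ?Zq" unfolding dec .
    then have "?Q ?Zs \<le> ?Q ?Zq" by (rule ennreal_cancel_last[OF _ Sfin Pfin])
    then have QQ: "(\<integral>\<^sup>+om. ennreal (QZ ?Zs (?X om)) \<partial>incr_space dt j) \<le> (\<integral>\<^sup>+om. ennreal (QZ ?Zq (?X om)) \<partial>incr_space dt j)"
      by (rule ennreal_cancel_mult) (rule dt)
    have eq: "(\<integral>\<^sup>+om. ennreal (QZ Z (?X om)) \<partial>incr_space dt j) = ennreal (nu/2) * (\<integral>\<^sup>+om. ennreal ((cmod (w (?X om) - Z (?X om)))^2) \<partial>incr_space dt j)" for Z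
    proof -
      have "(\<integral>\<^sup>+om. ennreal (QZ Z (?X om)) \<partial>incr_space dt j) = (\<integral>\<^sup>+om. ennreal (nu/2) * ennreal ((cmod (w (?X om) - Z (?X om)))^2) \<partial>incr_space dt j)"
      proof (rule nn_integral_cong_AE)
        show "AE om in incr_space dt j. ennreal (QZ Z (?X om)) = ennreal (nu/2) * ennreal ((cmod (w (?X om) - Z (?X om)))^2)"
          using AE_good
        proof eventually_elim
          case (elim om)
          show ?case unfolding QZ_good[where w=w, OF elim wR[of "Xp nu x j om"] wI[of "Xp nu x j om"]] using nu
            by (intro ennreal_mult) auto
        qed
      qed
      also have "\<dots> = ennreal (nu/2) * (\<integral>\<^sup>+om. ennreal ((cmod (w (?X om) - Z (?X om)))^2) \<partial>incr_space dt j)"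
        by (rule nn_integral_cmult_gen) (use nu in simp)
      finally show ?thesis .
    qed
    show ?thesis using QQ unfolding eq by (rule ennreal_cancel_mult) (use nu in simp)
  qed
qed

end

lemma joint_meas:
  fixes F :: "real \<Rightarrow> complex \<Rightarrow> complex"
  assumes lz: "\<And>y z z'. cmod (F y z - F y z') \<le> L * cmod (z - z')"
    and ly: "\<And>y y' z. cmod (F y z - F y' z) \<le> L * \<bar>y - y'\<bar> * cmod z"
    and L: "0 \<le> L"
  shows "(\<lambda>(y,z). F y z) \<in> borel_measurable (borel \<Otimes>\<^sub>M borel)"
proof -
  have "continuous_on UNIV (\<lambda>p::real \<times> complex. F (fst p) (snd p))"
  proof (rule continuous_at_imp_continuous_on, intro ballI)
    fix p0 :: "real \<times> complex"
    obtain y0 z0 where p0: "p0 = (y0, z0)" by (cases p0)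
    show "isCont (\<lambda>p. F (fst p) (snd p)) p0"
      unfolding continuous_at_eps_delta
    proof (intro allI impI)
      fix e :: real assume e: "0 < e"
      define K where "K = L * (cmod z0 + 1) + L"
      have K: "0 \<le> K" unfolding K_def using L by simp
      define d where "d = min 1 (e / (K + 1))"
      have d: "0 < d" "d \<le> 1" "d \<le> e / (K + 1)" unfolding d_def using e K by auto
      show "\<exists>d>0. \<forall>x'. dist x' p0 < d \<longrightarrow> dist (F (fst x') (snd x')) (F (fst p0) (snd p0)) < e"
      proof (intro exI[of _ d] conjI allI impI)
        show "0 < d" by (rule d)
        fix p assume dp: "dist p p0 < d"
        obtain y z where p: "p = (y, z)" by (cases p)
        have dy: "\<bar>y - y0\<bar> \<le> d" using dist_fst_le[of p p0] dp unfolding p p0 by (simp add: dist_real_def)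
        have dz: "cmod (z - z0) \<le> d" using dist_snd_le[of p p0] dp unfolding p p0 by (simp add: dist_norm)
        have zb: "cmod z \<le> cmod z0 + 1" using dz d(2) norm_triangle_ineq2[of z z0] by linarith
        have "cmod (F y z - F y0 z0) \<le> cmod (F y z - F y0 z) + cmod (F y0 z - F y0 z0)"
          using norm_triangle_ineq[of "F y z - F y0 z" "F y0 z - F y0 z0"] by simp
        also have "\<dots> \<le> L * \<bar>y - y0\<bar> * cmod z + L * cmod (z - z0)" using ly lz by (intro add_mono) auto
        also have "\<dots> \<le> L * d * (cmod z0 + 1) + L * d"
          using dy dz zb L by (intro add_mono mult_mono mult_left_mono) auto
        also have "\<dots> = d * K" unfolding K_def by (simp add: algebra_simps)
        also have "\<dots> \<le> e / (K + 1) * K" using d(3) K by (rule mult_right_mono)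
        also have "\<dots> < e" using e K by (simp add: field_simps)
        finally show "dist (F (fst p) (snd p)) (F (fst p0) (snd p0)) < e"
          unfolding p p0 by (simp add: dist_norm)
      qed
    qed
  qed
  then have "(\<lambda>p::real \<times> complex. F (fst p) (snd p)) \<in> borel_measurable borel"
    by (rule borel_measurable_continuous_onI)
  then show ?thesis by (simp add: borel_prod case_prod_beta')
qed

lemma inner_meas:
  assumes "0 < dt" and g[measurable]: "g \<in> borel_measurable borel"
  shows "(\<lambda>om. \<integral>\<^sup>+w. g (Xp nu x j om + sqrt nu * w) \<partial>gauss dt) \<in> borel_measurable (incr_space dt j)"
proof -
  interpret G: prob_space "gauss dt" using gauss_prob[OF assms(1)] .
  have X[measurable]: "Xp nu x j \<in> borel_measurable (incr_space dt j)" by (rule Xp_meas) simp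
  show ?thesis
  proof (rule G.borel_measurable_nn_integral)
    have a: "(\<lambda>p. Xp nu x j (fst p) + sqrt nu * snd p) \<in> borel_measurable (incr_space dt j \<Otimes>\<^sub>M gauss dt)"
      by measurable
    have "(\<lambda>p. g (Xp nu x j (fst p) + sqrt nu * snd p)) \<in> borel_measurable (incr_space dt j \<Otimes>\<^sub>M gauss dt)"
      using measurable_comp[OF a g] by (simp add: comp_def)
    then show "(\<lambda>(om, w). g (Xp nu x j om + sqrt nu * w)) \<in> borel_measurable (incr_space dt j \<Otimes>\<^sub>M gauss dt)"
      by (simp add: case_prod_beta')
  qed
qed

lemma inner_eq:
  assumes "0 < dt" and g[measurable]: "g \<in> borel_measurable borel"
  shows "(\<integral>\<^sup>+om. \<integral>\<^sup>+w. g (Xp nu x j om + sqrt nu * w) \<partial>gauss dt \<partial>incr_space dt j) = (\<integral>\<^sup>+om. g (Xp nu x (Suc j) om) \<partial>incr_space dt (Suc j))"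
proof -
  have X[measurable]: "Xp nu x (Suc j) \<in> borel_measurable (incr_space dt (Suc j))" by (rule Xp_meas) simp
  show ?thesis by (subst incr_split[OF assms(1)]) (auto simp: Xp_upd_Suc)
qed

lemma finZ_shift:
  assumes dt: "0 < dt" and nu: "0 < nu" and Zm[measurable]: "Z \<in> borel_measurable borel"
    and fin: "\<And>x'. EXp nu dt x' (Suc j) (\<lambda>y. (cmod (Z y))^2) < \<infinity>"
  shows "(\<integral>\<^sup>+om. ennreal ((cmod (Z (Xp nu x (Suc j) om)))^2 * (om j)^2) \<partial>incr_space dt (Suc j)) < \<infinity>"
proof -
  define g where "g z = ennreal ((cmod (Z z))^2)" for z
  have gm[measurable]: "g \<in> borel_measurable borel" unfolding g_def by measurable
  have X[measurable]: "Xp nu x (Suc j) \<in> borel_measurable (incr_space dt (Suc j))" by (rule Xp_meas) simp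
  have c[measurable]: "(\<lambda>om. om j) \<in> borel_measurable (incr_space dt (Suc j))" by (rule comp_meas) simp
  let ?s = "sqrt nu"
  have "(\<integral>\<^sup>+om. ennreal ((cmod (Z (Xp nu x (Suc j) om)))^2 * (om j)^2) \<partial>incr_space dt (Suc j))
      = (\<integral>\<^sup>+om. \<integral>\<^sup>+w. g (Xp nu x j om + ?s * w) * ennreal (w^2) \<partial>gauss dt \<partial>incr_space dt j)"
    by (subst incr_split[OF dt]) (auto simp: Xp_upd_Suc g_def ennreal_mult)
  also have "\<dots> \<le> (\<integral>\<^sup>+om. 2 * ennreal (exp (dt / 2)) * ((\<integral>\<^sup>+w. g (Xp nu (x + ?s * dt) j om + ?s * w) \<partial>gauss dt) + (\<integral>\<^sup>+w. g (Xp nu (x - ?s * dt) j om + ?s * w) \<partial>gauss dt)) \<partial>incr_space dt j)"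
  proof (rule nn_integral_mono)
    fix om
    have "(\<integral>\<^sup>+w. g (Xp nu x j om + ?s * w) * ennreal (w^2) \<partial>gauss dt) \<le>
        2 * ennreal (exp (dt / 2)) * ((\<integral>\<^sup>+w. g (Xp nu x j om + ?s * (w + dt)) \<partial>gauss dt) + (\<integral>\<^sup>+w. g (Xp nu x j om + ?s * (w - dt)) \<partial>gauss dt))"
      using gauss_sq_bound[OF dt, of "\<lambda>w. g (Xp nu x j om + ?s * w)"] by simp
    also have "(\<lambda>w. g (Xp nu x j om + ?s * (w + dt))) = (\<lambda>w. g (Xp nu (x + ?s * dt) j om + ?s * w))"
      by (rule ext) (simp add: Xp_def algebra_simps)
    also have "(\<lambda>w. g (Xp nu x j om + ?s * (w - dt))) = (\<lambda>w. g (Xp nu (x - ?s * dt) j om + ?s * w))"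
      by (rule ext) (simp add: Xp_def algebra_simps)
    finally show "(\<integral>\<^sup>+w. g (Xp nu x j om + ?s * w) * ennreal (w^2) \<partial>gauss dt) \<le>
        2 * ennreal (exp (dt / 2)) * ((\<integral>\<^sup>+w. g (Xp nu (x + ?s * dt) j om + ?s * w) \<partial>gauss dt) + (\<integral>\<^sup>+w. g (Xp nu (x - ?s * dt) j om + ?s * w) \<partial>gauss dt))" .
  qed
  also have "\<dots> = 2 * ennreal (exp (dt / 2)) * ((\<integral>\<^sup>+om. \<integral>\<^sup>+w. g (Xp nu (x + ?s * dt) j om + ?s * w) \<partial>gauss dt \<partial>incr_space dt j)
        + (\<integral>\<^sup>+om. \<integral>\<^sup>+w. g (Xp nu (x - ?s * dt) j om + ?s * w) \<partial>gauss dt \<partial>incr_space dt j))"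
  proof -
    note m1 = inner_meas[OF dt gm, of nu "x + ?s * dt" j] and m2 = inner_meas[OF dt gm, of nu "x - ?s * dt" j]
    have "(\<integral>\<^sup>+om. 2 * ennreal (exp (dt / 2)) * ((\<integral>\<^sup>+w. g (Xp nu (x + ?s * dt) j om + ?s * w) \<partial>gauss dt) + (\<integral>\<^sup>+w. g (Xp nu (x - ?s * dt) j om + ?s * w) \<partial>gauss dt)) \<partial>incr_space dt j)
      = 2 * ennreal (exp (dt / 2)) * (\<integral>\<^sup>+om. (\<integral>\<^sup>+w. g (Xp nu (x + ?s * dt) j om + ?s * w) \<partial>gauss dt) + (\<integral>\<^sup>+w. g (Xp nu (x - ?s * dt) j om + ?s * w) \<partial>gauss dt) \<partial>incr_space dt j)"
      by (rule nn_integral_cmult) (use m1 m2 in measurable)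
    also have "(\<integral>\<^sup>+om. (\<integral>\<^sup>+w. g (Xp nu (x + ?s * dt) j om + ?s * w) \<partial>gauss dt) + (\<integral>\<^sup>+w. g (Xp nu (x - ?s * dt) j om + ?s * w) \<partial>gauss dt) \<partial>incr_space dt j)
      = (\<integral>\<^sup>+om. \<integral>\<^sup>+w. g (Xp nu (x + ?s * dt) j om + ?s * w) \<partial>gauss dt \<partial>incr_space dt j)
        + (\<integral>\<^sup>+om. \<integral>\<^sup>+w. g (Xp nu (x - ?s * dt) j om + ?s * w) \<partial>gauss dt \<partial>incr_space dt j)"
      by (rule nn_integral_add) (use m1 m2 in auto)
    finally show ?thesis .
  qed
  also have "\<dots> = 2 * ennreal (exp (dt / 2)) * (EXp nu dt (x + ?s * dt) (Suc j) (\<lambda>y. (cmod (Z y))^2) + EXp nu dt (x - ?s * dt) (Suc j) (\<lambda>y. (cmod (Z y))^2))"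
    unfolding inner_eq[OF dt gm] by (simp add: EXp_def g_def)
  also have "\<dots> < \<infinity>" using fin[of "x + ?s * dt"] fin[of "x - ?s * dt"]
    by (simp add: ennreal_mult_less_top)
  finally show ?thesis .
qed

lemma finZ_L2:
  assumes dt: "0 < dt" and nu: "0 < nu" and Zm[measurable]: "Z \<in> borel_measurable borel"
    and fin: "(\<integral>\<^sup>+z. ennreal ((cmod (Z z))^2) \<partial>lborel) < \<infinity>"
  shows "(\<integral>\<^sup>+om. ennreal ((cmod (Z (Xp nu x (Suc j) om)))^2 * (om j)^2) \<partial>incr_space dt (Suc j)) < \<infinity>"
proof -
  interpret P: prob_space "incr_space dt j" using incr_prob[OF dt] .
  define g where "g z = ennreal ((cmod (Z z))^2)" for z
  have gm[measurable]: "g \<in> borel_measurable borel" unfolding g_def by measurable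
  have X[measurable]: "Xp nu x (Suc j) \<in> borel_measurable (incr_space dt (Suc j))" by (rule Xp_meas) simp
  have c[measurable]: "(\<lambda>om. om j) \<in> borel_measurable (incr_space dt (Suc j))" by (rule comp_meas) simp
  let ?s = "sqrt nu"
  let ?c = "ennreal (2 * dt / sqrt (2 * pi * dt) / ?s) * (\<integral>\<^sup>+z. g z \<partial>lborel)"
  have "(\<integral>\<^sup>+om. ennreal ((cmod (Z (Xp nu x (Suc j) om)))^2 * (om j)^2) \<partial>incr_space dt (Suc j))
      = (\<integral>\<^sup>+om. \<integral>\<^sup>+w. g (Xp nu x j om + ?s * w) * ennreal (w^2) \<partial>gauss dt \<partial>incr_space dt j)"
    by (subst incr_split[OF dt]) (auto simp: Xp_upd_Suc g_def ennreal_mult)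
  also have "\<dots> \<le> (\<integral>\<^sup>+om. ?c \<partial>incr_space dt j)"
    by (rule nn_integral_mono, rule gauss_density_bound[OF dt _ gm]) (use nu in simp)
  also have "\<dots> = ?c" using P.emeasure_space_1 by simp
  also have "\<dots> < \<infinity>" using fin unfolding g_def by (simp add: ennreal_mult_less_top)
  finally show ?thesis .
qed

lemma main_body:
  fixes L nu :: real and T K :: real and M :: nat and \<rho> :: "real \<Rightarrow> real"
    and f :: "real \<Rightarrow> real \<Rightarrow> complex \<Rightarrow> complex"
    and u ut ux uxx uxxx uxxxx utx utxx :: "real \<Rightarrow> real \<Rightarrow> complex"
    and G Gp :: "real \<Rightarrow> complex" and Na Nb :: nat
    and Unet Znet :: "nat \<Rightarrow> real \<Rightarrow> (nat \<Rightarrow> real) \<Rightarrow> complex"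
    and xi eta :: "nat \<Rightarrow> real \<Rightarrow> (nat \<Rightarrow> real)"
    and vhat what :: "nat \<Rightarrow> real \<Rightarrow> real \<Rightarrow> complex"
  assumes L: "0 < L" and nu: "0 < nu"
    and hT: "0 < T"
    and hM: "0 < M"
    and hdt: "(T / real M) \<le> (1 / (4 * L))"
    and hrc: "continuous_on {0..} \<rho>"
    and hrm: "mono_on {0..} \<rho>"
    and hr0: "\<rho> 0 = 0"
    and hrn: "(\<forall>s\<ge>0. 0 \<le> \<rho> s)"
    and hlip: "(\<forall>t\<in>{0..T}. \<forall>x y y'. cmod (f t x y - f t x y') \<le> L * cmod (y - y'))"
    and hlipx: "(\<forall>t\<in>{0..T}. \<forall>t'\<in>{0..T}. \<forall>x x'. \<forall>\<phi>::real \<Rightarrow> complex. continuous_on UNIV \<phi> \<longrightarrow> cmod (f t x (\<phi> x) - f t' x' (\<phi> x)) \<le> L * (sqrt (\<rho> \<bar>t - t'\<bar>) + \<bar>x - x'\<bar>) * cmod (\<phi> x))"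
    and hB: "(\<exists>B. \<forall>t\<in>{0..T}. \<forall>x. cmod (u t x) \<le> B)"
    and hder: "(\<forall>t\<in>{0..T}. \<forall>x. ((\<lambda>s. u s x) has_vector_derivative ut t x) (at t within {0..T}) \<and> ((\<lambda>y. u t y) has_vector_derivative ux t x) (at x) \<and> ((\<lambda>y. ux t y) has_vector_derivative uxx t x) (at x) \<and> ((\<lambda>y. uxx t y) has_vector_derivative uxxx t x) (at x) \<and> ((\<lambda>y. uxxx t y) has_vector_derivative uxxxx t x) (at x) \<and> ((\<lambda>s. ux s x) has_vector_derivative utx t x) (at t within {0..T}) \<and> ((\<lambda>s. uxx s x) has_vector_derivative utxx t x) (at t within {0..T}))"
    and hreg: "(\<forall>g\<in>{ut, ux, uxx, uxxx, uxxxx, utx, utxx}. continuous_on ({0..T} \<times> UNIV) (\<lambda>(t, x). g t x) \<and> (\<forall>t\<in>{0..T}. (\<integral>\<^sup>+ x. ennreal ((cmod (g t x))\<^sup>2) \<partial>lborel) < ennreal (K\<^sup>2)))"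
    and hpde: "(\<forall>t\<in>{0..T}. \<forall>x. \<i> * ut t x = complex_of_real (nu / 2) * uxx t x + f t x (u t x))"
    and hTG: "(\<forall>x. u T x = G x)"
    and hG: "(\<forall>x. (G has_vector_derivative Gp x) (at x))"
    and hU: "(\<forall>j<M. \<forall>\<xi>\<in>params Na. (\<lambda>y. Unet j y \<xi>) \<in> borel_measurable borel \<and> (\<forall>x. EXp nu (T / real M) x j (\<lambda>y. (cmod (Unet j y \<xi>))\<^sup>2) < \<infinity>))"
    and hZ: "(\<forall>j<M. \<forall>\<eta>\<in>params Nb. (\<lambda>y. Znet j y \<eta>) \<in> borel_measurable borel \<and> (\<forall>x. EXp nu (T / real M) x j (\<lambda>y. (cmod (Znet j y \<eta>))\<^sup>2) < \<infinity>))"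
    and halg: "(\<forall>j<M. \<forall>x. xi j x \<in> params Na \<and> eta j x \<in> params Nb \<and> (\<forall>\<xi>\<in>params Na. \<forall>\<eta>\<in>params Nb. loss nu (T / real M) f x j ((hatN M G Unet xi) (Suc j) x) ((hatN M Gp Znet eta) (Suc j) x) (\<lambda>y. Unet j y (xi j x)) (\<lambda>y. Znet j y (eta j x)) \<le> loss nu (T / real M) f x j ((hatN M G Unet xi) (Suc j) x) ((hatN M Gp Znet eta) (Suc j) x) (\<lambda>y. Unet j y \<xi>) (\<lambda>y. Znet j y \<eta>)))"
    and haux: "(\<forall>j<M. \<forall>x y. Re (vhat j x y) = condE nu (T / real M) (\<lambda>z w. Re ((hatN M G Unet xi) (Suc j) x z)) y - sqrt nu / 2 * condE nu (T / real M) (\<lambda>z w. (Re ((hatN M Gp Znet eta) (Suc j) x z) + Im ((hatN M Gp Znet eta) (Suc j) x z)) * w) y - Im (f (real j * (T / real M)) y (vhat j x y)) * (T / real M) \<and> Im (vhat j x y) = condE nu (T / real M) (\<lambda>z w. Im ((hatN M G Unet xi) (Suc j) x z)) y + sqrt nu / 2 * condE nu (T / real M) (\<lambda>z w. (Re ((hatN M Gp Znet eta) (Suc j) x z) - Im ((hatN M Gp Znet eta) (Suc j) x z)) * w) y + Re (f (real j * (T / real M)) y (vhat j x y)) * (T / real M) \<and> Re (what j x y) = 1 / ((T / real M) * sqrt nu) * condE nu (T / real M) (\<lambda>z w. (Re ((hatN M G Unet xi) (Suc j) x z) + Im ((hatN M G Unet xi) (Suc j) x z)) * w) y - 1 / (T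 / real M) * condE nu (T / real M) (\<lambda>z w. Im ((hatN M Gp Znet eta) (Suc j) x z) * w\<^sup>2) y \<and> Im (what j x y) = 1 / ((T / real M) * sqrt nu) * condE nu (T / real M) (\<lambda>z w. (Im ((hatN M G Unet xi) (Suc j) x z) - Re ((hatN M G Unet xi) (Suc j) x z)) * w) y + 1 / (T / real M) * condE nu (T / real M) (\<lambda>z w. Re ((hatN M Gp Znet eta) (Suc j) x z) * w\<^sup>2) y)"
    and hinf: "(\<forall>j<M. (\<lambda>x. INF \<xi>\<in>params Na. EXp nu (T / real M) x j (\<lambda>y. (cmod (vhat j x y - Unet j y \<xi>))\<^sup>2)) \<in> borel_measurable lborel \<and> (\<lambda>x. INF \<eta>\<in>params Nb. EXp nu (T / real M) x j (\<lambda>y. (cmod (what j x y - Znet j y \<eta>))\<^sup>2)) \<in> borel_measurable lborel)"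
  shows "(\<forall>j<M. (\<integral>\<^sup>+ x. EXp nu (T / real M) x j (\<lambda>y. (cmod (vhat j x y - Unet j y (xi j x)))\<^sup>2) \<partial>lborel) + ennreal (nu * (T / real M) / 2) * (\<integral>\<^sup>+ x. EXp nu (T / real M) x j (\<lambda>y. (cmod (what j x y - Znet j y (eta j x)))\<^sup>2) \<partial>lborel) \<le> ennreal (max 3 (nu / 2)) * ((\<integral>\<^sup>+ x. (INF \<xi>\<in>params Na. EXp nu (T / real M) x j (\<lambda>y. (cmod (vhat j x y - Unet j y \<xi>))\<^sup>2)) \<partial>lborel) + ennreal (T / real M) * (\<integral>\<^sup>+ x. (INF \<eta>\<in>params Nb. EXp nu (T / real M) x j (\<lambda>y. (cmod (what j x y - Znet j y \<eta>))\<^sup>2)) \<partial>lborel)))"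
proof (intro allI impI)
  fix j assume j: "j < M"
  define dt where "dt = T / real M"
  have dt: "0 < dt" using hT hM by (simp add: dt_def)
  have Ldt: "L * dt \<le> 1/4"
  proof -
    have "dt \<le> 1 / (4 * L)" using hdt by (simp add: dt_def)
    then have "L * dt \<le> L * (1 / (4 * L))" using L by (intro mult_left_mono) auto
    then show ?thesis using L by simp
  qed
  have tj: "real j * dt \<in> {0..T}"
  proof -
    have "real j * dt \<le> real M * dt" using j dt by (intro mult_right_mono) auto
    also have "\<dots> = T" using hM by (simp add: dt_def)
    finally show ?thesis using dt by simp
  qed
  have lip: "\<And>y z z'. cmod (f (real j * dt) y z - f (real j * dt) y z') \<le> L * cmod (z - z')"
    using hlip tj by blast
  have lipx: "\<And>y y' z. cmod (f (real j * dt) y z - f (real j * dt) y' z) \<le> L * \<bar>y - y'\<bar> * cmod z"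
  proof -
    fix y y' z
    have "cmod (f (real j * dt) y ((\<lambda>_. z) y) - f (real j * dt) y' ((\<lambda>_. z) y)) \<le> L * (sqrt (\<rho> \<bar>real j * dt - real j * dt\<bar>) + \<bar>y - y'\<bar>) * cmod ((\<lambda>_. z) y)"
      using hlipx[rule_format, of "real j * dt" "real j * dt" "\<lambda>_. z" y y', OF tj tj] by simp
    then show "cmod (f (real j * dt) y z - f (real j * dt) y' z) \<le> L * \<bar>y - y'\<bar> * cmod z" using hr0 by simp
  qed
  define c0 where "c0 = cmod (f (real j * dt) 0 0)"
  have c0: "0 \<le> c0" unfolding c0_def by simp
  have bd: "\<And>y z. cmod (f (real j * dt) y z) \<le> c0 + L * cmod z"
  proof -
    fix y z
    have e: "f (real j * dt) y 0 = f (real j * dt) 0 0" using lipx[of y 0 0] by simp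
    have "cmod (f (real j * dt) y z) \<le> cmod (f (real j * dt) y 0) + cmod (f (real j * dt) y z - f (real j * dt) y 0)"
      using norm_triangle_ineq[of "f (real j * dt) y 0" "f (real j * dt) y z - f (real j * dt) y 0"] by simp
    also have "\<dots> \<le> c0 + L * cmod z" using lip[of y z 0] unfolding c0_def e by simp
    finally show "cmod (f (real j * dt) y z) \<le> c0 + L * cmod z" .
  qed
  have Fm: "(\<lambda>(y,z). f (real j * dt) y z) \<in> borel_measurable (borel \<Otimes>\<^sub>M borel)"
    by (rule joint_meas[OF lip lipx]) (use L in simp)
  have T0: "T \<in> {0..T}" using hT by simp
  have Gm: "G \<in> borel_measurable borel"
  proof (rule borel_measurable_continuous_onI)
    show "continuous_on UNIV G"
      by (rule continuous_at_imp_continuous_on) (use hG has_vector_derivative_continuous in blast)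
  qed
  have uTG: "(\<lambda>y. u T y) = G" using hTG by auto
  have Gp_eq: "Gp = ux T"
  proof
    fix y
    have "((\<lambda>y. u T y) has_vector_derivative ux T y) (at y)" using hder T0 by blast
    then have "(G has_vector_derivative ux T y) (at y)" unfolding uTG .
    then show "Gp y = ux T y" using hG vector_derivative_unique_at by blast
  qed
  have uxreg: "continuous_on ({0..T} \<times> UNIV) (\<lambda>(t, x). ux t x) \<and> (\<forall>t\<in>{0..T}. (\<integral>\<^sup>+ x. ennreal ((cmod (ux t x))\<^sup>2) \<partial>lborel) < ennreal (K\<^sup>2))"
    using hreg by blast
  have Gpm: "Gp \<in> borel_measurable borel"
  proof (rule borel_measurable_continuous_onI)
    have "continuous_on UNIV (\<lambda>y. (\<lambda>(t, x). ux t x) (T, y))"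
      by (rule continuous_on_compose2[OF conjunct1[OF uxreg]]) (use T0 in \<open>auto intro!: continuous_intros\<close>)
    then show "continuous_on UNIV Gp" unfolding Gp_eq by simp
  qed
  have GpL2: "(\<integral>\<^sup>+z. ennreal ((cmod (Gp z))^2) \<partial>lborel) < \<infinity>"
  proof -
    have "(\<integral>\<^sup>+z. ennreal ((cmod (Gp z))^2) \<partial>lborel) < ennreal (K^2)" using uxreg T0 unfolding Gp_eq by blast
    then show ?thesis using less_trans by fastforce
  qed
  obtain B where B: "\<And>t x. t \<in> {0..T} \<Longrightarrow> cmod (u t x) \<le> B" using hB by blast
  have GB: "\<And>y. cmod (G y) \<le> B" using B[OF T0] hTG by metis
  note hU' = hU[folded dt_def] and hZ' = hZ[folded dt_def] and halg' = halg[folded dt_def]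
    and haux' = haux[folded dt_def] and hinf' = hinf[folded dt_def]
  define a where "a x = EXp nu dt x j (\<lambda>y. (cmod (vhat j x y - Unet j y (xi j x)))\<^sup>2)" for x
  define b where "b x = EXp nu dt x j (\<lambda>y. (cmod (what j x y - Znet j y (eta j x)))\<^sup>2)" for x
  define Iv where "Iv x = (INF \<xi>\<in>params Na. EXp nu dt x j (\<lambda>y. (cmod (vhat j x y - Unet j y \<xi>))\<^sup>2))" for x
  define Iw where "Iw x = (INF \<eta>\<in>params Nb. EXp nu dt x j (\<lambda>y. (cmod (what j x y - Znet j y \<eta>))\<^sup>2))" for x
  have px: "a x \<le> 3 * Iv x \<and> b x \<le> Iw x" for x
  proof -
    let ?Up = "hatN M G Unet xi (Suc j) x" and ?Zp = "hatN M Gp Znet eta (Suc j) x"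
    have UZ: "?Up \<in> borel_measurable borel \<and> ?Zp \<in> borel_measurable borel \<and>
       (\<integral>\<^sup>+om. ennreal ((cmod (?Up (Xp nu x (Suc j) om)))^2) \<partial>incr_space dt (Suc j)) < \<infinity> \<and>
       (\<integral>\<^sup>+om. ennreal ((cmod (?Zp (Xp nu x (Suc j) om)))^2 * (om j)^2) \<partial>incr_space dt (Suc j)) < \<infinity>"
    proof (cases "Suc j = M")
      case True
      have e1: "?Up = G" and e2: "?Zp = Gp" using True by (auto simp: hatN_def)
      interpret P: prob_space "incr_space dt (Suc j)" using incr_prob[OF dt] .
      have "(\<integral>\<^sup>+om. ennreal ((cmod (G (Xp nu x (Suc j) om)))^2) \<partial>incr_space dt (Suc j)) \<le> (\<integral>\<^sup>+om. ennreal (B^2) \<partial>incr_space dt (Suc j))"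
      proof (rule nn_integral_mono)
        fix om
        have "(cmod (G (Xp nu x (Suc j) om)))^2 \<le> B^2" using GB by (intro power_mono) auto
        then show "ennreal ((cmod (G (Xp nu x (Suc j) om)))^2) \<le> ennreal (B^2)" by (rule ennreal_leI)
      qed
      also have "\<dots> < \<infinity>" using P.emeasure_space_1 by simp
      finally have fU: "(\<integral>\<^sup>+om. ennreal ((cmod (G (Xp nu x (Suc j) om)))^2) \<partial>incr_space dt (Suc j)) < \<infinity>" .
      have fZ: "(\<integral>\<^sup>+om. ennreal ((cmod (Gp (Xp nu x (Suc j) om)))^2 * (om j)^2) \<partial>incr_space dt (Suc j)) < \<infinity>"
        by (rule finZ_L2[OF dt nu Gpm GpL2])
      show ?thesis unfolding e1 e2 using Gm Gpm fU fZ by blast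
    next
      case False
      then have sj: "Suc j < M" using j by simp
      have e1: "?Up = (\<lambda>y. Unet (Suc j) y (xi (Suc j) x))" and e2: "?Zp = (\<lambda>y. Znet (Suc j) y (eta (Suc j) x))"
        using False by (auto simp: hatN_def)
      have px1: "xi (Suc j) x \<in> params Na" and px2: "eta (Suc j) x \<in> params Nb" using halg' sj by blast+
      have U1: "(\<lambda>y. Unet (Suc j) y (xi (Suc j) x)) \<in> borel_measurable borel \<and> (\<forall>x'. EXp nu dt x' (Suc j) (\<lambda>y. (cmod (Unet (Suc j) y (xi (Suc j) x)))\<^sup>2) < \<infinity>)"
        using hU' sj px1 by blast
      have Z1: "(\<lambda>y. Znet (Suc j) y (eta (Suc j) x)) \<in> borel_measurable borel \<and> (\<forall>x'. EXp nu dt x' (Suc j) (\<lambda>y. (cmod (Znet (Suc j) y (eta (Suc j) x)))\<^sup>2) < \<infinity>)"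
        using hZ' sj px2 by blast
      have fZ: "(\<integral>\<^sup>+om. ennreal ((cmod (Znet (Suc j) (Xp nu x (Suc j) om) (eta (Suc j) x)))^2 * (om j)^2) \<partial>incr_space dt (Suc j)) < \<infinity>"
        using finZ_shift[OF dt nu, of "\<lambda>y. Znet (Suc j) y (eta (Suc j) x)" j x] Z1 by blast
      show ?thesis unfolding e1 e2 using U1 Z1 fZ unfolding EXp_def by blast
    qed
    have xs: "xi j x \<in> params Na" and es: "eta j x \<in> params Nb" using halg' j by blast+
    have min: "\<And>p q. p \<in> params Na \<Longrightarrow> q \<in> params Nb \<Longrightarrow> loss nu dt f x j ?Up ?Zp (\<lambda>y. Unet j y (xi j x)) (\<lambda>y. Znet j y (eta j x)) \<le> loss nu dt f x j ?Up ?Zp (\<lambda>y. Unet j y p) (\<lambda>y. Znet j y q)"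
      using halg' j by blast
    have UNm: "\<And>p. p \<in> params Na \<Longrightarrow> (\<lambda>y. Unet j y p) \<in> borel_measurable borel \<and> (\<integral>\<^sup>+om. ennreal ((cmod (Unet j (Xp nu x j om) p))^2) \<partial>incr_space dt j) < \<infinity>"
      using hU' j unfolding EXp_def by blast
    have ZNm: "\<And>q. q \<in> params Nb \<Longrightarrow> (\<lambda>y. Znet j y q) \<in> borel_measurable borel \<and> (\<integral>\<^sup>+om. ennreal ((cmod (Znet j (Xp nu x j om) q))^2) \<partial>incr_space dt j) < \<infinity>"
      using hZ' j unfolding EXp_def by blast
    have aux: "\<And>y. Re (vhat j x y) = condE nu dt (\<lambda>z w. Re (?Up z)) y - sqrt nu / 2 * condE nu dt (\<lambda>z w. (Re (?Zp z) + Im (?Zp z)) * w) y - Im (f (real j * dt) y (vhat j x y)) * dt \<and>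
        Im (vhat j x y) = condE nu dt (\<lambda>z w. Im (?Up z)) y + sqrt nu / 2 * condE nu dt (\<lambda>z w. (Re (?Zp z) - Im (?Zp z)) * w) y + Re (f (real j * dt) y (vhat j x y)) * dt \<and>
        Re (what j x y) = 1 / (dt * sqrt nu) * condE nu dt (\<lambda>z w. (Re (?Up z) + Im (?Up z)) * w) y - 1 / dt * condE nu dt (\<lambda>z w. Im (?Zp z) * w\<^sup>2) y \<and>
        Im (what j x y) = 1 / (dt * sqrt nu) * condE nu dt (\<lambda>z w. (Im (?Up z) - Re (?Up z)) * w) y + 1 / dt * condE nu dt (\<lambda>z w. Re (?Zp z) * w\<^sup>2) y"
      using haux' j by blast
    note R = perx[where nu=nu and dt=dt and L=L and j=j and x=x and Up="?Up" and Zp="?Zp" and f=f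
        and UNt="\<lambda>y p. Unet j y p" and ZNt="\<lambda>y q. Znet j y q" and xs="xi j x" and es="eta j x"
        and PA="params Na" and PB="params Nb" and v="vhat j x" and w="what j x"]
    have R1: "\<And>p. p \<in> params Na \<Longrightarrow> a x \<le> 3 * EXp nu dt x j (\<lambda>y. (cmod (vhat j x y - Unet j y p))\<^sup>2)"
      unfolding a_def EXp_def
      by (rule R(1)[OF nu dt L Ldt c0 _ _ _ _ Fm lip bd xs es UNm ZNm min]) (use UZ aux in auto)
    have R2: "\<And>q. q \<in> params Nb \<Longrightarrow> b x \<le> EXp nu dt x j (\<lambda>y. (cmod (what j x y - Znet j y q))\<^sup>2)"
      unfolding b_def EXp_def
      by (rule R(2)[OF nu dt L Ldt c0 _ _ _ _ Fm lip bd xs es UNm ZNm min]) (use UZ aux in auto)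
    have h3: "ennreal (1/3) * 3 = 1"
    proof -
      have "ennreal (1/3) * ennreal 3 = ennreal (1/3 * 3)" by (rule ennreal_mult[symmetric]) auto
      then show ?thesis by simp
    qed
    have h3': "3 * ennreal (1/3) = 1" using h3 by (simp add: mult.commute)
    have "a x \<le> 3 * Iv x"
    proof -
      have "ennreal (1/3) * a x \<le> Iv x"
        unfolding Iv_def
      proof (rule INF_greatest)
        fix p assume p: "p \<in> params Na"
        have "ennreal (1/3) * a x \<le> ennreal (1/3) * (3 * EXp nu dt x j (\<lambda>y. (cmod (vhat j x y - Unet j y p))\<^sup>2))"
          by (rule mult_left_mono[OF R1[OF p]]) simp
        also have "\<dots> = EXp nu dt x j (\<lambda>y. (cmod (vhat j x y - Unet j y p))\<^sup>2)"
          by (simp add: mult.assoc[symmetric] h3)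
        finally show "ennreal (1/3) * a x \<le> EXp nu dt x j (\<lambda>y. (cmod (vhat j x y - Unet j y p))\<^sup>2)" .
      qed
      then have "3 * (ennreal (1/3) * a x) \<le> 3 * Iv x" by (rule mult_left_mono) simp
      then show ?thesis by (simp add: mult.assoc[symmetric] h3')
    qed
    moreover have "b x \<le> Iw x" unfolding Iw_def by (rule INF_greatest) (rule R2)
    ultimately show ?thesis by blast
  qed
  have Ivm: "Iv \<in> borel_measurable lborel" and Iwm: "Iw \<in> borel_measurable lborel"
    using hinf' j unfolding Iv_def[abs_def] Iw_def[abs_def] by blast+
  let ?C = "max 3 (nu / 2)"
  have pw: "a x + ennreal (nu * dt / 2) * b x \<le> ennreal ?C * Iv x + ennreal ?C * (ennreal dt * Iw x)" for x
  proof (rule add_mono)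
    have "a x \<le> 3 * Iv x" using px by blast
    also have "\<dots> \<le> ennreal ?C * Iv x"
    proof (rule mult_right_mono)
      have "ennreal 3 \<le> ennreal ?C" by (rule ennreal_leI) simp
      then show "3 \<le> ennreal ?C" by simp
    qed simp
    finally show "a x \<le> ennreal ?C * Iv x" .
    have "ennreal (nu * dt / 2) * b x \<le> ennreal (nu * dt / 2) * Iw x" using px by (intro mult_left_mono) auto
    also have "\<dots> = ennreal (nu / 2) * (ennreal dt * Iw x)"
    proof -
      have e: "ennreal (nu * dt / 2) = ennreal (nu / 2) * ennreal dt" using nu dt by (simp add: ennreal_mult[symmetric])
      show ?thesis unfolding e by (simp add: mult.assoc)
    qed
    also have "\<dots> \<le> ennreal ?C * (ennreal dt * Iw x)"
      by (rule mult_right_mono) (rule ennreal_leI, simp_all)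
    finally show "ennreal (nu * dt / 2) * b x \<le> ennreal ?C * (ennreal dt * Iw x)" .
  qed
  have "(\<integral>\<^sup>+x. a x \<partial>lborel) + ennreal (nu * dt / 2) * (\<integral>\<^sup>+x. b x \<partial>lborel)
      \<le> (\<integral>\<^sup>+x. a x \<partial>lborel) + (\<integral>\<^sup>+x. ennreal (nu * dt / 2) * b x \<partial>lborel)"
    by (intro add_left_mono nn_integral_cmult_le)
  also have "\<dots> \<le> (\<integral>\<^sup>+x. a x + ennreal (nu * dt / 2) * b x \<partial>lborel)" by (rule nn_integral_superadd)
  also have "\<dots> \<le> (\<integral>\<^sup>+x. ennreal ?C * Iv x + ennreal ?C * (ennreal dt * Iw x) \<partial>lborel)"
    by (intro nn_integral_mono pw)
  also have "\<dots> = ennreal ?C * ((\<integral>\<^sup>+x. Iv x \<partial>lborel) + ennreal dt * (\<integral>\<^sup>+x. Iw x \<partial>lborel))"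
    using Ivm Iwm by (simp add: nn_integral_add nn_integral_cmult distrib_left)
  finally show "(\<integral>\<^sup>+ x. EXp nu (T / real M) x j (\<lambda>y. (cmod (vhat j x y - Unet j y (xi j x)))\<^sup>2) \<partial>lborel) + ennreal (nu * (T / real M) / 2) * (\<integral>\<^sup>+ x. EXp nu (T / real M) x j (\<lambda>y. (cmod (what j x y - Znet j y (eta j x)))\<^sup>2) \<partial>lborel) \<le> ennreal (max 3 (nu / 2)) * ((\<integral>\<^sup>+ x. (INF \<xi>\<in>params Na. EXp nu (T / real M) x j (\<lambda>y. (cmod (vhat j x y - Unet j y \<xi>))\<^sup>2)) \<partial>lborel) + ennreal (T / real M) * (\<integral>\<^sup>+ x. (INF \<eta>\<in>params Nb. EXp nu (T / real M) x j (\<lambda>y. (cmod (what j x y - Znet j y \<eta>))\<^sup>2)) \<partial>lborel))"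
    unfolding a_def b_def Iv_def Iw_def dt_def .
qed

theorem lemma4p2:
  fixes L nu :: real
  assumes "0 < L" and "0 < nu"
  shows "\<exists>C>0. \<exists>\<delta>0>0. \<forall>(T::real) (K::real) (M::nat) (\<rho>::real \<Rightarrow> real)
      (f::real \<Rightarrow> real \<Rightarrow> complex \<Rightarrow> complex)
      (u::real \<Rightarrow> real \<Rightarrow> complex) (ut::real \<Rightarrow> real \<Rightarrow> complex) (ux::real \<Rightarrow> real \<Rightarrow> complex)
      (uxx::real \<Rightarrow> real \<Rightarrow> complex) (uxxx::real \<Rightarrow> real \<Rightarrow> complex)
      (uxxxx::real \<Rightarrow> real \<Rightarrow> complex) (utx::real \<Rightarrow> real \<Rightarrow> complex)
      (utxx::real \<Rightarrow> real \<Rightarrow> complex)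
      (G::real \<Rightarrow> complex) (Gp::real \<Rightarrow> complex) (Na::nat) (Nb::nat)
      (Unet::nat \<Rightarrow> real \<Rightarrow> (nat \<Rightarrow> real) \<Rightarrow> complex)
      (Znet::nat \<Rightarrow> real \<Rightarrow> (nat \<Rightarrow> real) \<Rightarrow> complex)
      (xi::nat \<Rightarrow> real \<Rightarrow> (nat \<Rightarrow> real)) (eta::nat \<Rightarrow> real \<Rightarrow> (nat \<Rightarrow> real))
      (vhat::nat \<Rightarrow> real \<Rightarrow> real \<Rightarrow> complex) (what::nat \<Rightarrow> real \<Rightarrow> real \<Rightarrow> complex).
    (let dt = T / real M;
         Uh = hatN M G Unet xi;
         Zh = hatN M Gp Znet eta
     in
     \<comment> \<open>time grid, delta t sufficiently small\<close>
     0 < T \<longrightarrow> 0 < K \<longrightarrow> 0 < M \<longrightarrow> dt \<le> \<delta>0 \<longrightarrow>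
     \<comment> \<open>modulus rho\<close>
     continuous_on {0..} \<rho> \<longrightarrow> mono_on {0..} \<rho> \<longrightarrow> \<rho> 0 = 0 \<longrightarrow> (\<forall>s\<ge>0. 0 \<le> \<rho> s) \<longrightarrow>
     \<comment> \<open>assumption (iii)\<close>
     (\<forall>t\<in>{0..T}. \<forall>x y y'. cmod (f t x y - f t x y') \<le> L * cmod (y - y')) \<longrightarrow>
     (\<forall>t\<in>{0..T}. \<forall>t'\<in>{0..T}. \<forall>x x'. \<forall>\<phi>::real \<Rightarrow> complex. continuous_on UNIV \<phi> \<longrightarrow>
        cmod (f t x (\<phi> x) - f t' x' (\<phi> x))
          \<le> L * (sqrt (\<rho> \<bar>t - t'\<bar>) + \<bar>x - x'\<bar>) * cmod (\<phi> x)) \<longrightarrow>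
     \<comment> \<open>assumption (i): u bounded solution with the stated continuous derivatives\<close>
     (\<exists>B. \<forall>t\<in>{0..T}. \<forall>x. cmod (u t x) \<le> B) \<longrightarrow>
     (\<forall>t\<in>{0..T}. \<forall>x.
        ((\<lambda>s. u s x) has_vector_derivative ut t x) (at t within {0..T}) \<and>
        ((\<lambda>y. u t y) has_vector_derivative ux t x) (at x) \<and>
        ((\<lambda>y. ux t y) has_vector_derivative uxx t x) (at x) \<and>
        ((\<lambda>y. uxx t y) has_vector_derivative uxxx t x) (at x) \<and>
        ((\<lambda>y. uxxx t y) has_vector_derivative uxxxx t x) (at x) \<and>
        ((\<lambda>s. ux s x) has_vector_derivative utx t x) (at t within {0..T}) \<and>
        ((\<lambda>s. uxx s x) has_vector_derivative utxx t x) (at t within {0..T})) \<longrightarrow>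
     (\<forall>g\<in>{ut, ux, uxx, uxxx, uxxxx, utx, utxx}.
        continuous_on ({0..T} \<times> UNIV) (\<lambda>(t, x). g t x) \<and>
        \<comment> \<open>assumption (ii): L-infinity in time, L2 in space, norm below K\<close>
        (\<forall>t\<in>{0..T}. (\<integral>\<^sup>+ x. ennreal ((cmod (g t x))\<^sup>2) \<partial>lborel) < ennreal (K\<^sup>2))) \<longrightarrow>
     (\<forall>t\<in>{0..T}. \<forall>x. \<i> * ut t x = complex_of_real (nu / 2) * uxx t x + f t x (u t x)) \<longrightarrow>
     (\<forall>x. u T x = G x) \<longrightarrow>
     (\<forall>x. (G has_vector_derivative Gp x) (at x)) \<longrightarrow>
     \<comment> \<open>networks: measurable, finite second moments (implicit in the paper)\<close>
     (\<forall>j<M. \<forall>\<xi>\<in>params Na. (\<lambda>y. Unet j y \<xi>) \<in> borel_measurable borel \<and>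
        (\<forall>x. EXp nu dt x j (\<lambda>y. (cmod (Unet j y \<xi>))\<^sup>2) < \<infinity>)) \<longrightarrow>
     (\<forall>j<M. \<forall>\<eta>\<in>params Nb. (\<lambda>y. Znet j y \<eta>) \<in> borel_measurable borel \<and>
        (\<forall>x. EXp nu dt x j (\<lambda>y. (cmod (Znet j y \<eta>))\<^sup>2) < \<infinity>)) \<longrightarrow>
     \<comment> \<open>algorithm: (xi j x, eta j x) is a minimizer of L_j (at starting point x)\<close>
     (\<forall>j<M. \<forall>x. xi j x \<in> params Na \<and> eta j x \<in> params Nb \<and>
        (\<forall>\<xi>\<in>params Na. \<forall>\<eta>\<in>params Nb.
           loss nu dt f x j (Uh (Suc j) x) (Zh (Suc j) x)
                (\<lambda>y. Unet j y (xi j x)) (\<lambda>y. Znet j y (eta j x))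
         \<le> loss nu dt f x j (Uh (Suc j) x) (Zh (Suc j) x)
                (\<lambda>y. Unet j y \<xi>) (\<lambda>y. Znet j y \<eta>))) \<longrightarrow>
     \<comment> \<open>auxiliary system defining hat-v_j, hat-w_j\<close>
     (\<forall>j<M. \<forall>x y.
        Re (vhat j x y) = condE nu dt (\<lambda>z w. Re (Uh (Suc j) x z)) y
           - sqrt nu / 2 * condE nu dt (\<lambda>z w. (Re (Zh (Suc j) x z) + Im (Zh (Suc j) x z)) * w) y
           - Im (f (real j * dt) y (vhat j x y)) * dt \<and>
        Im (vhat j x y) = condE nu dt (\<lambda>z w. Im (Uh (Suc j) x z)) y
           + sqrt nu / 2 * condE nu dt (\<lambda>z w. (Re (Zh (Suc j) x z) - Im (Zh (Suc j) x z)) * w) y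
           + Re (f (real j * dt) y (vhat j x y)) * dt \<and>
        Re (what j x y) = 1 / (dt * sqrt nu)
             * condE nu dt (\<lambda>z w. (Re (Uh (Suc j) x z) + Im (Uh (Suc j) x z)) * w) y
           - 1 / dt * condE nu dt (\<lambda>z w. Im (Zh (Suc j) x z) * w\<^sup>2) y \<and>
        Im (what j x y) = 1 / (dt * sqrt nu)
             * condE nu dt (\<lambda>z w. (Im (Uh (Suc j) x z) - Re (Uh (Suc j) x z)) * w) y
           + 1 / dt * condE nu dt (\<lambda>z w. Re (Zh (Suc j) x z) * w\<^sup>2) y) \<longrightarrow>
     \<comment> \<open>the integrands defining the approximation errors are measurable in x\<close>
     (\<forall>j<M. (\<lambda>x. INF \<xi>\<in>params Na. EXp nu dt x j (\<lambda>y. (cmod (vhat j x y - Unet j y \<xi>))\<^sup>2))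
               \<in> borel_measurable lborel \<and>
            (\<lambda>x. INF \<eta>\<in>params Nb. EXp nu dt x j (\<lambda>y. (cmod (what j x y - Znet j y \<eta>))\<^sup>2))
               \<in> borel_measurable lborel) \<longrightarrow>
     \<comment> \<open>conclusion\<close>
     (\<forall>j<M.
        (\<integral>\<^sup>+ x. EXp nu dt x j (\<lambda>y. (cmod (vhat j x y - Unet j y (xi j x)))\<^sup>2) \<partial>lborel)
        + ennreal (nu * dt / 2)
          * (\<integral>\<^sup>+ x. EXp nu dt x j (\<lambda>y. (cmod (what j x y - Znet j y (eta j x)))\<^sup>2) \<partial>lborel)
        \<le> ennreal C *
          ((\<integral>\<^sup>+ x. (INF \<xi>\<in>params Na. EXp nu dt x j (\<lambda>y. (cmod (vhat j x y - Unet j y \<xi>))\<^sup>2)) \<partial>lborel)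
           + ennreal dt *
             (\<integral>\<^sup>+ x. (INF \<eta>\<in>params Nb. EXp nu dt x j (\<lambda>y. (cmod (what j x y - Znet j y \<eta>))\<^sup>2)) \<partial>lborel))))"
proof -
  show ?thesis
    apply (rule exI[of _ "max 3 (nu/2)"])
    apply (rule conjI, simp)
    apply (rule exI[of _ "1/(4*L)"])
    apply (rule conjI, simp add: assms)
    apply (intro allI)
    apply (simp only: Let_def)
    apply (intro impI)
    apply (rule main_body[OF assms])
                        apply assumption+
    done
qed

end
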